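(* Let $N$ be a positive integer and let $\mathbf a=[a_1,a_2,a_3,a_4]$ be a vector of integers with $a_i\not\equiv 0\pmod N$ for all $i$, $a_1\not\equiv\pm a_2\pmod N$ and $a_3\not\equiv\pm a_4\pmod N$. Let \[W_{\mathbf a}(\tau)=\frac{\wp(a_1/N;L_\tau)-\wp(a_2/N;L_\tau)}{\wp(a_3/N;L_\tau)-\wp(a_4/N;L_\tau)},\] a modular function for $\Gamma_1(N)$. Let $Q=[u,t]$ be a cusp of $\Gamma_1(N)$, where either $1\le t<N/2$, $D=\gcd(t,N)$, $1\le u\le D$, $\gcd(u,D)=1$, or $t\in\{N/2,N\}$, $D=\gcd(t,N)$, $1\le u\le D/2$, $\gcd(u,D)=1$. Put $t'=t/D$. Then the order of $W_{\mathbf a}$ at $Q$, with respect to the local parameter $q_D=\exp(2\pi i\tau D/N)$, equals \[\min(\{a_1t'\}_D,\{a_2t'\}_D)-\min(\{a_3t'\}_D,\{a_4t'\}_D).\] In particular it is independent of $u$.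
   Context: $L_\tau$ is the lattice $\mathbf Z+\mathbf Z\tau$ for $\tau$ in the upper half plane, and $\wp(z;L_\tau)$ is the Weierstrass $\wp$-function of $L_\tau$. $\Gamma_1(N)=\{\begin{pmatrix}a&b\\c&d\end{pmatrix}\in SL_2(\mathbf Z): a\equiv1,\ c\equiv0 \pmod N\}$. The cusp $[u,t]$ of $\Gamma_1(N)$ denotes the $\Gamma_1(N)$-equivalence class of cusps $a/c$ ($\gcd(a,c)=1$) with $c\equiv t\pmod N$ and $a\equiv u\pmod{D}$, $D=\gcd(t,N)$; the listed pairs $[u,t]$ form a complete set of inequivalent cusps, and $q_D=\exp(2\pi i\tau D/N)$ is a local parameter there (i.e. one expands $W_{\mathbf a}(B\tau)$ in powers of $q_D$, where $B\in SL_2(\mathbf Z)$ maps $\infty$ to the cusp). For a divisor $D$ of $N$ and an integer $n$, the integer $\{n\}_D$ is uniquely determined by: $0\le\{n\}_D\le \frac N{2D}$ and $n\equiv\mu\{n\}_D\pmod{N/D}$ for some $\mu\in\{\pm1\}$ (with $\mu=1$ if $\{n\}_D\in\{0,\frac N{2D}\}$). *)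

theory Defs
  imports "HOL-Complex_Analysis.Complex_Analysis" "HOL-Number_Theory.Cong"
begin

text \<open>The series converges absolutely (tau not real), so the unconditional sum is used.\<close>
definition wp :: "complex \<Rightarrow> complex \<Rightarrow> complex" where
  "wp z \<tau> = 1 / z\<^sup>2 +
     (\<Sum>\<^sub>\<infinity>(m, n) \<in> (UNIV :: (int \<times> int) set) - {(0, 0)}.
        1 / (z - (of_int m + of_int n * \<tau>))\<^sup>2 - 1 / (of_int m + of_int n * \<tau>)\<^sup>2)"

definition W :: "int \<Rightarrow> int \<Rightarrow> int \<Rightarrow> int \<Rightarrow> int \<Rightarrow> complex \<Rightarrow> complex" where
  "W N a1 a2 a3 a4 \<tau> =
     (wp (of_int a1 / of_int N) \<tau> - wp (of_int a2 / of_int N) \<tau>) /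
     (wp (of_int a3 / of_int N) \<tau> - wp (of_int a4 / of_int N) \<tau>)"

definition moebius :: "int \<Rightarrow> int \<Rightarrow> int \<Rightarrow> int \<Rightarrow> complex \<Rightarrow> complex" where
  "moebius p q r s \<tau> = (of_int p * \<tau> + of_int q) / (of_int r * \<tau> + of_int s)"

text \<open>f has order m at infinity with respect to the local parameter
  q = exp(2 pi i tau / h): for Im tau large, f(tau) = q^m g(q) with g holomorphic
  near 0 and g(0) nonzero, i.e. the q-expansion of f starts with a nonzero
  coefficient at q^m.\<close>
definition has_q_order :: "(complex \<Rightarrow> complex) \<Rightarrow> real \<Rightarrow> int \<Rightarrow> bool" where
  "has_q_order f h m \<longleftrightarrow>
     (\<exists>r>0. \<exists>g. g holomorphic_on ball 0 r \<and> g 0 \<noteq> 0 \<and>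
        (\<exists>y0. \<forall>\<tau>. Im \<tau> > y0 \<longrightarrow>
            (let q = exp (2 * of_real pi * \<i> * \<tau> / of_real h)
             in q \<in> ball 0 r \<and> f \<tau> = q powi m * g q)))"

definition brace :: "int \<Rightarrow> int \<Rightarrow> int \<Rightarrow> int" where
  "brace N D n = (THE x. 0 \<le> x \<and> 2 * x \<le> N div D \<and>
     (\<exists>\<mu> \<in> {1, -1}. [n = \<mu> * x] (mod (N div D)) \<and>
        ((x = 0 \<or> 2 * x = N div D) \<longrightarrow> \<mu> = 1)))"

end

theory Submission
  imports Defs
begin

lemma open_nonInts: "open (- (\<int> :: complex set))"
  by (simp add: open_Compl)

lemma Ints_nonpos_sub: "(z::complex) \<notin> \<int> \<Longrightarrow> z \<notin> \<int>\<^sub>\<le>\<^sub>0"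
  using nonpos_Ints_subset_Ints by blast

lemma one_minus_notin_Ints: "(z::complex) \<notin> \<int> \<Longrightarrow> 1 - z \<notin> \<int>"
proof
  assume "z \<notin> \<int>" "1 - z \<in> \<int>"
  hence "1 - (1 - z) \<in> \<int>" by (intro Ints_diff) auto
  thus False using \<open>z \<notin> \<int>\<close> by simp
qed

lemma sin_pi_nonzero: "(z::complex) \<notin> \<int> \<Longrightarrow> sin (of_real pi * z) \<noteq> 0"
  by (auto simp: sin_eq_0 Ints_def)

lemma digamma_reflection:
  fixes z :: complex
  assumes z: "z \<notin> \<int>"
  shows "(Digamma z - Digamma (1 - z)) * sin (of_real pi * z) + of_real pi * cos (of_real pi * z) = 0"
proof -
  let ?G = "\<lambda>z::complex. Gamma z * Gamma (1 - z) * sin (of_real pi * z)"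
  have z1: "1 - z \<notin> \<int>" using one_minus_notin_Ints[OF z] .
  have d1: "(?G has_field_derivative
      (Gamma z * Digamma z * Gamma (1 - z) + Gamma z * (Gamma (1 - z) * Digamma (1 - z) * (-1))) * sin (of_real pi * z)
       + Gamma z * Gamma (1 - z) * (cos (of_real pi * z) * of_real pi)) (at z)"
    using Ints_nonpos_sub[OF z] Ints_nonpos_sub[OF z1]
    by (auto intro!: derivative_eq_intros)
  have eq: "?G w = of_real pi" if "w \<in> - \<int>" for w
  proof -
    have "w \<notin> \<int>" using that by simp
    then show ?thesis using Gamma_reflection_complex[of w] sin_pi_nonzero[of w] by simp
  qed
  have d2: "(?G has_field_derivative 0) (at z)"
  proof (rule has_field_derivative_transform_within_open[of "\<lambda>_. of_real pi" _ _ "- \<int>"])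
    show "((\<lambda>_. complex_of_real pi) has_field_derivative 0) (at z)" by simp
  qed (use z eq open_nonInts in auto)
  have "(Gamma z * Digamma z * Gamma (1 - z) + Gamma z * (Gamma (1 - z) * Digamma (1 - z) * (-1))) * sin (of_real pi * z)
       + Gamma z * Gamma (1 - z) * (cos (of_real pi * z) * of_real pi) = 0"
    using DERIV_unique[OF d1 d2] .
  hence "Gamma z * Gamma (1 - z) * ((Digamma z - Digamma (1 - z)) * sin (of_real pi * z) + of_real pi * cos (of_real pi * z)) = 0"
    by (simp add: algebra_simps)
  moreover have "Gamma z \<noteq> 0" "Gamma (1 - z) \<noteq> 0"
    using Ints_nonpos_sub[OF z] Ints_nonpos_sub[OF z1] by (auto simp: Gamma_eq_zero_iff)
  ultimately show ?thesis by simp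
qed

lemma alg1: "((- c * (- a * c)) * a - (- c * b) * (b * c)) / (a * a) = c ^ 2 * (a^2 + b^2) / a^2" for a b c :: complex
  by (simp add: power2_eq_square algebra_simps)

lemma cot_deriv:
  fixes z :: complex assumes s: "sin (of_real pi * z) \<noteq> 0"
  shows "((\<lambda>z::complex. - of_real pi * cos (of_real pi * z) / sin (of_real pi * z)) has_field_derivative
     of_real (pi ^ 2) / (sin (of_real pi * z))^2) (at z)"
proof -
  have "((\<lambda>z::complex. - of_real pi * cos (of_real pi * z) / sin (of_real pi * z)) has_field_derivative
     ((- of_real pi * (- sin (of_real pi * z) * of_real pi)) * sin (of_real pi * z)
      - (- of_real pi * cos (of_real pi * z)) * (cos (of_real pi * z) * of_real pi)) / (sin (of_real pi * z) * sin (of_real pi * z))) (at z)"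
    by (rule DERIV_divide derivative_eq_intros refl | use s in simp)+
  moreover have "((- of_real pi * (- sin (of_real pi * z) * of_real pi)) * sin (of_real pi * z)
      - (- of_real pi * cos (of_real pi * z)) * (cos (of_real pi * z) * of_real pi)) / (sin (of_real pi * z) * sin (of_real pi * z))
     = of_real pi ^ 2 * ((sin (of_real pi * z))^2 + (cos (of_real pi * z))^2) / (sin (of_real pi * z))^2"
    by (rule alg1)
  ultimately show ?thesis by simp
qed

lemma trigamma_reflection:
  fixes z :: complex
  assumes z: "z \<notin> \<int>"
  shows "Polygamma 1 z + Polygamma 1 (1 - z) = of_real (pi^2) / (sin (of_real pi * z))^2"
proof -
  let ?D = "\<lambda>z::complex. Digamma z - Digamma (1 - z)"
  let ?C = "\<lambda>z::complex. - of_real pi * cos (of_real pi * z) / sin (of_real pi * z)"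
  have z1: "1 - z \<notin> \<int>" using one_minus_notin_Ints[OF z] .
  have d1: "(?D has_field_derivative (Polygamma 1 z - Polygamma 1 (1 - z) * (-1))) (at z)"
    using Ints_nonpos_sub[OF z] Ints_nonpos_sub[OF z1]
    by (auto intro!: derivative_eq_intros)
  have eq: "?C w = ?D w" if "w \<in> - \<int>" for w
  proof -
    have w: "w \<notin> \<int>" using that by simp
    from digamma_reflection[OF w] sin_pi_nonzero[OF w] show ?thesis
      by (simp add: field_simps)
  qed
  have s: "sin (of_real pi * z) \<noteq> 0" using sin_pi_nonzero[OF z] .
  have d3: "(?D has_field_derivative of_real (pi ^ 2) / (sin (of_real pi * z))^2) (at z)"
    by (rule has_field_derivative_transform_within_open[OF cot_deriv[OF s], of "- \<int>"]) (use z eq open_nonInts in auto)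
  have "Polygamma 1 z - Polygamma 1 (1 - z) * (-1) = of_real (pi ^ 2) / (sin (of_real pi * z))^2"
    using DERIV_unique[OF d1 d3] .
  thus ?thesis by simp
qed

lemma sq_summable_norm:
  fixes w :: complex
  shows "summable (\<lambda>k. norm (inverse ((w + of_nat k)^2)))"
proof (rule summable_comparison_test_ev)
  show "summable (\<lambda>k::nat. 4 * inverse (real k ^ 2))"
    using inverse_power_summable[of 2] by (intro summable_mult) auto
  show "\<forall>\<^sub>F k in sequentially. norm (norm (inverse ((w + of_nat k)^2))) \<le> 4 * inverse (real k ^ 2)"
    using eventually_gt_at_top[of "nat \<lceil>2 * norm w\<rceil>"]
  proof eventually_elim
    case (elim k)
    have k: "real k > 2 * norm w" using elim by linarith
    have "norm (w + of_nat k) \<ge> real k - norm w"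
      using norm_diff_ineq[of "of_nat k :: complex" "w"] by (simp add: add.commute)
    hence nk: "norm (w + of_nat k) \<ge> real k / 2" using k by linarith
    have kp: "real k > 0" using k by (smt (verit) norm_ge_zero)
    have "norm (norm (inverse ((w + of_nat k)^2))) = inverse (norm (w + of_nat k) ^ 2)"
      by (simp add: norm_inverse norm_power)
    also have "\<dots> \<le> inverse ((real k / 2)^2)"
      using nk kp by (intro le_imp_inverse_le power_mono) auto
    also have "\<dots> = 4 * inverse (real k ^ 2)" by (simp add: field_simps power2_eq_square)
    finally show ?case .
  qed
qed

lemma trigamma_has_sum:
  fixes w :: complex
  assumes "w \<noteq> 0"
  shows "((\<lambda>k::nat. inverse ((w + of_nat k)^2)) has_sum Polygamma 1 w) UNIV"
proof -
  have "(\<lambda>k. inverse ((w + of_nat k)^Suc 1)) sums ((-1) ^ Suc 1 * Polygamma 1 w / fact 1)"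
    by (rule Polygamma_LIMSEQ) (use assms in auto)
  hence "(\<lambda>k. inverse ((w + of_nat k)^2)) sums Polygamma 1 w" by (simp add: numeral_2_eq_2)
  thus ?thesis by (rule norm_summable_imp_has_sum[OF sq_summable_norm])
qed

lemma int_split: "(UNIV :: int set) = range int \<union> range (\<lambda>k. - int k - 1)"
proof -
  have "x \<in> range int \<union> range (\<lambda>k. - int k - 1)" for x :: int
  proof (cases "x \<ge> 0")
    case True then show ?thesis by (metis UnI1 nonneg_int_cases rangeI)
  next
    case False then have "x = - int (nat (- x - 1)) - 1" by simp
    then show ?thesis by blast
  qed
  thus ?thesis by blast
qed

lemma has_sum_int_split:
  fixes f :: "int \<Rightarrow> complex"
  assumes "((\<lambda>k. f (int k)) has_sum A) UNIV" "((\<lambda>k. f (- int k - 1)) has_sum B) UNIV"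
  shows "(f has_sum (A + B)) UNIV"
proof -
  have "(f has_sum A) (range int)"
    using assms(1) by (subst has_sum_reindex) (auto simp: o_def)
  moreover have "(f has_sum B) (range (\<lambda>k. - int k - 1))"
    using assms(2) by (subst has_sum_reindex) (auto simp: o_def inj_on_def)
  moreover have "range int \<inter> range (\<lambda>k. - int k - 1) = {}" by auto
  ultimately have "(f has_sum (A + B)) (range int \<union> range (\<lambda>k. - int k - 1))"
    by (rule has_sum_Un_disjoint)
  thus ?thesis by (simp add: int_split[symmetric])
qed

lemma sum_inv_sq_Ints:
  fixes w :: complex
  assumes w: "w \<notin> \<int>"
  shows "((\<lambda>m::int. inverse ((w + of_int m)^2)) has_sum (Polygamma 1 w + Polygamma 1 (1 - w))) UNIV"
proof (rule has_sum_int_split)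
  have "w \<noteq> 0" using w by auto
  thus "((\<lambda>k. inverse ((w + of_int (int k))^2)) has_sum Polygamma 1 w) UNIV"
    using trigamma_has_sum[of w] by simp
  have "1 - w \<noteq> 0" using w by auto
  hence "((\<lambda>k. inverse ((1 - w + of_nat k)^2)) has_sum Polygamma 1 (1 - w)) UNIV"
    using trigamma_has_sum[of "1 - w"] by simp
  moreover have "(w + of_int (- int k - 1))^2 = (1 - w + of_nat k)^2" for k
    by (simp add: power2_eq_square algebra_simps)
  ultimately show "((\<lambda>k. inverse ((w + of_int (- int k - 1))^2)) has_sum Polygamma 1 (1 - w)) UNIV"
    by simp
qed

definition FF :: "complex \<Rightarrow> complex" where "FF x = x / (1 - x)^2"

lemma sin_sq_FF:
  fixes w :: complex
  assumes s: "sin (of_real pi * w) \<noteq> 0"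
  shows "of_real (pi^2) / (sin (of_real pi * w))^2 = (2 * of_real pi * \<i>)^2 * FF (exp (2 * of_real pi * \<i> * w))"
proof -
  define e where "e = exp (\<i> * (of_real pi * w))"
  have e0: "e \<noteq> 0" by (simp add: e_def)
  have x: "exp (2 * of_real pi * \<i> * w) = e^2"
    by (simp add: e_def power2_eq_square exp_add[symmetric] algebra_simps)
  have ie: "exp (- (\<i> * (of_real pi * w))) = inverse e" by (simp add: e_def exp_minus)
  have sn: "sin (of_real pi * w) = (e - inverse e) / (2 * \<i>)"
    by (simp add: sin_exp_eq ie e_def)
  have ne: "e - inverse e \<noteq> 0" using s sn by auto
  have ne2: "1 - e^2 \<noteq> 0"
  proof
    assume "1 - e^2 = 0"
    hence "e - inverse e = 0" using e0 by (simp add: field_simps power2_eq_square)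
    thus False using ne by simp
  qed
  show ?thesis
    unfolding FF_def x sn using e0 ne ne2
    by (simp add: field_simps power2_eq_square)
qed

definition pp :: "int \<Rightarrow> real" where "pp m = (1 + real_of_int \<bar>m\<bar>) powr (-3/2)"

lemma pp_nonneg: "pp m \<ge> 0" by (simp add: pp_def)

lemma pp_has_sum: "\<exists>S. (pp has_sum S) UNIV"
proof -
  have s1: "summable (\<lambda>k::nat. real (Suc k) powr (-3/2))"
    using summable_real_powr_iff[of "-3/2"] summable_Suc_iff[of "\<lambda>n. real n powr (-3/2)"] by simp
  have s2: "summable (\<lambda>k::nat. real (Suc (Suc k)) powr (-3/2))"
    using s1 summable_Suc_iff[of "\<lambda>k. real (Suc k) powr (-3/2)"] by simp
  have h1: "((\<lambda>k::nat. pp (int k)) has_sum (\<Sum>k. real (Suc k) powr (-3/2))) UNIV"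
    using sums_nonneg_imp_has_sum[OF summable_sums[OF s1]] by (simp add: pp_def add.commute)
  have h2: "((\<lambda>k::nat. pp (- int k - 1)) has_sum (\<Sum>k. real (Suc (Suc k)) powr (-3/2))) UNIV"
  proof -
    have "pp (- int k - 1) = real (Suc (Suc k)) powr (-3/2)" for k
      by (simp add: pp_def add.commute)
    thus ?thesis using sums_nonneg_imp_has_sum[OF summable_sums[OF s2]] by simp
  qed
  have "(pp has_sum ((\<Sum>k. real (Suc k) powr (-3/2)) + (\<Sum>k. real (Suc (Suc k)) powr (-3/2)))) (range int \<union> range (\<lambda>k. - int k - 1))"
  proof (rule has_sum_Un_disjoint)
    show "(pp has_sum (\<Sum>k. real (Suc k) powr (-3/2))) (range int)"
      using h1 by (subst has_sum_reindex) (auto simp: o_def)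
    show "(pp has_sum (\<Sum>k. real (Suc (Suc k)) powr (-3/2))) (range (\<lambda>k. - int k - 1))"
      using h2 by (subst has_sum_reindex) (auto simp: o_def inj_on_def)
  qed auto
  moreover have "range int \<union> range (\<lambda>k. - int k - 1) = (UNIV :: int set)"
  proof -
    have "x \<in> range int \<union> range (\<lambda>k. - int k - 1)" for x :: int
    proof (cases "x \<ge> 0")
      case True then show ?thesis by (metis UnI1 nonneg_int_cases rangeI)
    next
      case False then have "x = - int (nat (- x - 1)) - 1" by simp
      then show ?thesis by blast
    qed
    thus ?thesis by blast
  qed
  ultimately show ?thesis by auto
qed

lemma pp2_summable: "(\<lambda>(m,n). pp m * pp n) summable_on (UNIV :: (int \<times> int) set)"
proof -
  obtain S where S: "(pp has_sum S) UNIV" using pp_has_sum by blast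
  have "(\<lambda>x. case x of (m, n) \<Rightarrow> pp m * pp n) summable_on Sigma UNIV (\<lambda>_. UNIV)"
  proof (rule summable_on_SigmaI[where g = "\<lambda>m. pp m * S"])
    show "((\<lambda>n. case (m, n) of (m, n) \<Rightarrow> pp m * pp n) has_sum pp m * S) UNIV" for m
      using has_sum_cmult_right[OF S, of "pp m"] by simp
    show "(\<lambda>m. pp m * S) summable_on UNIV"
      using has_sum_cmult_left[OF S, of S] summable_on_def
      by (metis has_sum_cmult_left summable_on_def S)
  qed (auto intro: mult_nonneg_nonneg pp_nonneg)
  thus ?thesis by simp
qed

lemma lattice_lower_bound:
  fixes \<tau> :: complex
  assumes y: "Im \<tau> > 0"
  shows "\<exists>\<kappa>::real>0. \<forall>m n::int. norm (of_int m + of_int n * \<tau>) \<ge> \<kappa> * (real_of_int \<bar>m\<bar> + real_of_int \<bar>n\<bar>)"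
proof -
  define y where "y = Im \<tau>"
  define T where "T = norm \<tau>"
  have yp: "y > 0" using y by (simp add: y_def)
  have Tp: "T \<ge> y" unfolding T_def y_def using abs_Im_le_cmod[of \<tau>] by simp
  define \<kappa> where "\<kappa> = y / (2 * (1 + y + T))"
  have kp: "\<kappa> > 0" using yp Tp by (simp add: \<kappa>_def)
  have "norm (of_int m + of_int n * \<tau>) \<ge> \<kappa> * (real_of_int \<bar>m\<bar> + real_of_int \<bar>n\<bar>)" for m n :: int
  proof -
    define A where "A = norm (of_int m + of_int n * \<tau>)"
    have A1: "A \<ge> \<bar>n\<bar> * y"
    proof -
      have "\<bar>Im (of_int m + of_int n * \<tau>)\<bar> \<le> A" unfolding A_def by (rule abs_Im_le_cmod)
      moreover have "Im (of_int m + of_int n * \<tau>) = of_int n * Im \<tau>" by simp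
      ultimately show ?thesis using yp unfolding y_def by (simp add: abs_mult)
    qed
    have A2: "A \<ge> \<bar>m\<bar> - \<bar>n\<bar> * T"
    proof -
      have "norm (of_int m :: complex) - norm (of_int n * \<tau>) \<le> A"
        unfolding A_def using norm_diff_ineq[of "of_int m :: complex" "of_int n * \<tau>"] by simp
      thus ?thesis by (simp add: norm_mult T_def)
    qed
    have n1: "\<bar>n\<bar> \<le> A / y" using A1 yp by (simp add: field_simps)
    have "\<bar>n\<bar> * T \<le> A / y * T" using n1 Tp yp by (intro mult_right_mono) auto
    hence "\<bar>m\<bar> \<le> A + A / y * T" using A2 by linarith
    also have "A + A / y * T = A * (y + T) / y" using yp by (simp add: field_simps)
    finally have A3: "\<bar>m\<bar> \<le> A * (y + T) / y" .
    have yT: "y + T > 0" using yp Tp by simp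
    have B1: "\<bar>m\<bar> * y / (y + T) \<le> A"
      using A3 yp yT by (simp add: field_simps)
    have k1: "\<kappa> \<le> y / (2 * (y + T))" unfolding \<kappa>_def using yp Tp
      by (intro divide_left_mono) auto
    have k2: "\<kappa> \<le> y / 2" unfolding \<kappa>_def using yp Tp
      by (intro divide_left_mono) auto
    have C1: "\<kappa> * \<bar>m\<bar> \<le> A / 2"
    proof -
      have "\<kappa> * \<bar>m\<bar> \<le> y / (2 * (y + T)) * \<bar>m\<bar>" using k1 by (intro mult_right_mono) auto
      also have "\<dots> = (\<bar>m\<bar> * y / (y + T)) / 2" by (simp add: field_simps)
      also have "\<dots> \<le> A / 2" using B1 by (intro divide_right_mono) auto
      finally show ?thesis .
    qed
    have C2: "\<kappa> * \<bar>n\<bar> \<le> A / 2"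
    proof -
      have "\<kappa> * \<bar>n\<bar> \<le> y / 2 * \<bar>n\<bar>" using k2 by (intro mult_right_mono) auto
      thus ?thesis using A1 by (simp add: field_simps)
    qed
    have "\<kappa> * (real_of_int \<bar>m\<bar> + real_of_int \<bar>n\<bar>) \<le> A" using C1 C2 by (simp add: distrib_left)
    thus ?thesis by (simp add: A_def)
  qed
  thus ?thesis using kp by blast
qed

lemma inv_cube_le:
  assumes "(m, n) \<noteq> (0::int, 0::int)"
  shows "1 / (real_of_int \<bar>m\<bar> + real_of_int \<bar>n\<bar>)^3 \<le> 27/8 * (pp m * pp n)"
proof -
  define a where "a = 1 + real_of_int \<bar>m\<bar>"
  define b where "b = 1 + real_of_int \<bar>n\<bar>"
  define s where "s = real_of_int \<bar>m\<bar> + real_of_int \<bar>n\<bar>"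
  have s1: "s \<ge> 1" using assms unfolding s_def by auto
  have a1: "a \<ge> 1" and b1: "b \<ge> 1" by (auto simp: a_def b_def)
  have ab: "a * b \<le> (3 * s / 2)^2"
  proof -
    have "((a + b) / 2)^2 - a * b = ((a - b) / 2)^2" by (simp add: power2_eq_square field_simps)
    hence "a * b \<le> ((a + b) / 2)^2" using zero_le_power2[of "(a - b) / 2"] by linarith
    also have "(a + b) / 2 \<le> 3 * s / 2" using s1 by (simp add: a_def b_def s_def)
    hence "((a + b) / 2)^2 \<le> (3 * s / 2)^2" using a1 b1 by (intro power_mono) auto
    finally show ?thesis .
  qed
  have "(a * b) powr (3/2) \<le> ((3 * s / 2)^2) powr (3/2)"
    using ab a1 b1 by (intro powr_mono2) auto
  also have "((3 * s / 2)^2) powr (3/2) = (3 * s / 2) ^ 3"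
  proof -
    have "((3 * s / 2)^2) powr (3/2) = ((3 * s / 2) powr 2) powr (3/2)"
      using s1 by (simp add: powr_realpow)
    also have "\<dots> = (3 * s / 2) powr 3" by (simp add: powr_powr)
    also have "\<dots> = (3 * s / 2) ^ 3" using s1 by (simp add: powr_realpow)
    finally show ?thesis .
  qed
  finally have P: "(a * b) powr (3/2) \<le> 27/8 * s^3" by (simp add: power3_eq_cube field_simps)
  have pos: "(a * b) powr (3/2) > 0" using a1 b1 by simp
  have "pp m * pp n = (a * b) powr (-3/2)"
    unfolding pp_def a_def b_def by (simp add: powr_mult)
  also have "\<dots> = 1 / (a * b) powr (3/2)" by (simp add: powr_minus_divide)
  finally have E: "pp m * pp n = 1 / (a * b) powr (3/2)" .
  have "1 / s^3 \<le> 27/8 * (1 / (a * b) powr (3/2))"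
    using P pos s1 by (simp add: field_simps)
  thus ?thesis unfolding E s_def .
qed

definition omega :: "complex \<Rightarrow> int \<Rightarrow> int \<Rightarrow> complex" where
  "omega \<tau> m n = of_int m + of_int n * \<tau>"

lemma summand_bound:
  fixes z w :: complex
  assumes "w \<noteq> 0" "2 * norm z \<le> norm w"
  shows "norm (1 / (z - w)^2 - 1 / w^2) \<le> 10 * norm z / norm w ^ 3"
proof -
  have nw: "norm w > 0" using assms by simp
  have zw: "norm (z - w) \<ge> norm w / 2"
    using norm_triangle_ineq2[of w z] assms by (simp add: norm_minus_commute)
  have zw0: "z - w \<noteq> 0" using zw nw by auto
  have num: "1 * w^2 - 1 * (z - w)^2 = z * (2 * w - z)" by (simp add: power2_eq_square algebra_simps)
  have eq: "1 / (z - w)^2 - 1 / w^2 = z * (2 * w - z) / ((z - w)^2 * w^2)"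
    using diff_frac_eq[of "(z - w)^2" "w^2" 1 1] zw0 assms(1) num by simp
  have n1: "norm (2 * w - z) \<le> 5/2 * norm w"
    using norm_triangle_ineq4[of "2*w" z] assms by simp
  have "norm (z * (2 * w - z) / ((z - w)^2 * w^2)) = norm z * norm (2 * w - z) / (norm (z - w)^2 * norm w^2)"
    by (simp add: norm_mult norm_divide norm_power)
  also have "\<dots> \<le> norm z * (5/2 * norm w) / ((norm w / 2)^2 * norm w^2)"
    using n1 zw nw by (intro frac_le mult_left_mono mult_mono power_mono) auto
  also have "\<dots> = 10 * norm z / norm w ^ 3" using nw by (simp add: field_simps power2_eq_square power3_eq_cube)
  finally show ?thesis unfolding eq .
qed

lemma wp_summable:
  fixes \<tau> z :: complex
  assumes y: "Im \<tau> > 0"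
  shows "(\<lambda>(m,n). 1 / (z - omega \<tau> m n)^2 - 1 / (omega \<tau> m n)^2) summable_on (UNIV :: (int \<times> int) set)"
proof -
  obtain \<kappa> :: real where kp: "\<kappa> > 0" and kb: "\<And>m n. norm (omega \<tau> m n) \<ge> \<kappa> * (real_of_int \<bar>m\<bar> + real_of_int \<bar>n\<bar>)"
    using lattice_lower_bound[OF y] unfolding omega_def by blast
  define f where "f = (\<lambda>(m,n). 1 / (z - omega \<tau> m n)^2 - 1 / (omega \<tau> m n)^2)"
  define A where "A = {(m,n). (m,n) \<noteq> (0::int,0::int) \<and> 2 * norm z \<le> norm (omega \<tau> m n)}"
  define K where "K = \<lceil>2 * norm z / \<kappa>\<rceil>"
  have fin: "finite (UNIV - A)"
  proof (rule finite_subset)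
    show "UNIV - A \<subseteq> {-K..K} \<times> {-K..K}"
    proof
      fix x assume x: "x \<in> UNIV - A"
      obtain m n where mn: "x = (m, n)" by fastforce
      have "\<bar>m\<bar> \<le> K \<and> \<bar>n\<bar> \<le> K"
      proof (cases "(m,n) = (0,0)")
        case True
        have "2 * norm z / \<kappa> \<ge> 0" using kp by simp
        hence "K \<ge> 0" unfolding K_def by simp
        then show ?thesis using True by auto
      next
        case False
        hence "norm (omega \<tau> m n) < 2 * norm z" using x mn by (auto simp: A_def)
        hence "\<kappa> * (real_of_int \<bar>m\<bar> + real_of_int \<bar>n\<bar>) < 2 * norm z" using kb[of m n] by linarith
        hence "real_of_int \<bar>m\<bar> + real_of_int \<bar>n\<bar> < 2 * norm z / \<kappa>" using kp by (simp add: field_simps)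
        hence "real_of_int \<bar>m\<bar> + real_of_int \<bar>n\<bar> \<le> real_of_int K" unfolding K_def by linarith
        thus ?thesis by linarith
      qed
      thus "x \<in> {-K..K} \<times> {-K..K}" using mn by auto
    qed
  qed auto
  define C where "C = 10 * norm z / \<kappa>^3 * (27/8)"
  have bound: "norm (f x) \<le> C * (case x of (m,n) \<Rightarrow> pp m * pp n)" if "x \<in> A" for x
  proof -
    obtain m n where mn: "x = (m, n)" by fastforce
    have ne: "(m,n) \<noteq> (0,0)" and big: "2 * norm z \<le> norm (omega \<tau> m n)" using that mn by (auto simp: A_def)
    have s1: "real_of_int \<bar>m\<bar> + real_of_int \<bar>n\<bar> \<ge> 1" using ne by auto
    have kpos: "\<kappa> * (real_of_int \<bar>m\<bar> + real_of_int \<bar>n\<bar>) > 0" using kp s1 by simp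
    have w0: "omega \<tau> m n \<noteq> 0" using kb[of m n] kpos by auto
    have "norm (f x) \<le> 10 * norm z / norm (omega \<tau> m n) ^ 3"
      unfolding mn f_def using summand_bound[OF w0 big] by simp
    also have "\<dots> \<le> 10 * norm z / (\<kappa> * (real_of_int \<bar>m\<bar> + real_of_int \<bar>n\<bar>)) ^ 3"
      using kb[of m n] kpos by (intro divide_left_mono power_mono mult_pos_pos) auto
    also have "\<dots> = 10 * norm z / \<kappa>^3 * (1 / (real_of_int \<bar>m\<bar> + real_of_int \<bar>n\<bar>)^3)"
      by (simp add: power_mult_distrib)
    also have "\<dots> \<le> 10 * norm z / \<kappa>^3 * (27/8 * (pp m * pp n))"
      using inv_cube_le[OF ne] kp by (intro mult_left_mono) auto
    finally show ?thesis unfolding C_def mn by simp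
  qed
  have "(\<lambda>x. C * (case x of (m,n) \<Rightarrow> pp m * pp n)) summable_on A"
    using summable_on_cmult_right[OF pp2_summable, of C] summable_on_subset_banach by blast
  hence "(\<lambda>x. norm (f x)) summable_on A"
    by (rule Infinite_Sum.abs_summable_on_comparison_test') (use bound in auto)
  hence sA: "f summable_on A" using summable_on_iff_abs_summable_on_complex by blast
  have sB: "f summable_on (UNIV - A)" using fin by simp
  have "f summable_on (A \<union> (UNIV - A))" using summable_on_union[OF sA sB] .
  thus ?thesis unfolding f_def by simp
qed

lemma my_has_sum_diff:
  fixes f g :: "'a \<Rightarrow> complex"
  assumes "(f has_sum a) A" "(g has_sum b) A"
  shows "((\<lambda>x. f x - g x) has_sum (a - b)) A"
proof -
  have "((\<lambda>x. - g x) has_sum (- b)) A" by (rule has_sum_uminusI[OF assms(2)])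
  from has_sum_add[OF assms(1) this] show ?thesis by simp
qed

lemma S_has_sum:
  fixes w :: complex
  assumes w: "w \<notin> \<int>"
  shows "((\<lambda>m::int. 1 / (w - of_int m)^2) has_sum ((2 * of_real pi * \<i>)^2 * FF (exp (2 * of_real pi * \<i> * w)))) UNIV"
proof -
  have h: "((\<lambda>m::int. inverse ((w + of_int m)^2)) has_sum (Polygamma 1 w + Polygamma 1 (1 - w))) UNIV"
    by (rule sum_inv_sq_Ints[OF w])
  have e: "Polygamma 1 w + Polygamma 1 (1 - w) = (2 * of_real pi * \<i>)^2 * FF (exp (2 * of_real pi * \<i> * w))"
    using trigamma_reflection[OF w] sin_sq_FF[OF sin_pi_nonzero[OF w]] by simp
  have bij: "bij_betw uminus (UNIV :: int set) UNIV"
    by (rule bij_betwI[of _ _ _ uminus]) auto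
  have "((\<lambda>m::int. inverse ((w + of_int (- m))^2)) has_sum (Polygamma 1 w + Polygamma 1 (1 - w))) UNIV"
    using has_sum_reindex_bij_betw[OF bij, of "\<lambda>m. inverse ((w + of_int m)^2)"] h by simp
  thus ?thesis using e by (simp add: divide_inverse)
qed

lemma wp_as_infsum:
  fixes \<tau> z :: complex
  assumes y: "Im \<tau> > 0"
  shows "((\<lambda>(m,n). 1 / (z - omega \<tau> m n)^2 - 1 / (omega \<tau> m n)^2) has_sum wp z \<tau>) (UNIV :: (int \<times> int) set)"
proof -
  define f where "f = (\<lambda>(m,n). 1 / (z - omega \<tau> m n)^2 - 1 / (omega \<tau> m n)^2)"
  have s: "f summable_on UNIV" unfolding f_def by (rule wp_summable[OF y])
  have s': "f summable_on (UNIV - {(0,0)})" by (rule summable_on_subset_banach[OF s]) auto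
  have "infsum f (insert (0,0) (UNIV - {(0,0)})) = f (0,0) + infsum f (UNIV - {(0,0)})"
    by (rule infsum_insert[OF s']) auto
  moreover have "insert (0,0) (UNIV - {(0,0)}) = (UNIV :: (int \<times> int) set)" by auto
  moreover have "f (0,0) = 1 / z^2" by (simp add: f_def omega_def)
  moreover have "wp z \<tau> = 1 / z^2 + infsum f (UNIV - {(0,0)})"
    unfolding wp_def f_def omega_def by simp
  ultimately have "infsum f UNIV = wp z \<tau>" by simp
  thus ?thesis using s unfolding f_def[symmetric] by (metis has_sum_infsum)
qed

lemma wp_diff_rows:
  fixes \<tau> z1 z2 :: complex
  assumes y: "Im \<tau> > 0"
    and n1: "\<And>n::int. z1 - of_int n * \<tau> \<notin> \<int>"
    and n2: "\<And>n::int. z2 - of_int n * \<tau> \<notin> \<int>"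
  shows "((\<lambda>n::int. (2 * of_real pi * \<i>)^2 * (FF (exp (2 * of_real pi * \<i> * (z1 - of_int n * \<tau>)))
                                          - FF (exp (2 * of_real pi * \<i> * (z2 - of_int n * \<tau>)))))
          has_sum (wp z1 \<tau> - wp z2 \<tau>)) UNIV"
proof -
  define g where "g = (\<lambda>(n,m). 1 / (z1 - omega \<tau> m n)^2 - 1 / (z2 - omega \<tau> m n)^2)"
  have h1: "((\<lambda>(m,n). (1 / (z1 - omega \<tau> m n)^2 - 1 / (omega \<tau> m n)^2)
                   - (1 / (z2 - omega \<tau> m n)^2 - 1 / (omega \<tau> m n)^2)) has_sum (wp z1 \<tau> - wp z2 \<tau>)) (UNIV :: (int \<times> int) set)"
    using my_has_sum_diff[OF wp_as_infsum[OF y, of z1] wp_as_infsum[OF y, of z2]]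
    by (simp add: case_prod_unfold)
  have "((\<lambda>(m,n). g (n,m)) has_sum (wp z1 \<tau> - wp z2 \<tau>)) (UNIV :: (int \<times> int) set)"
    using h1 by (simp add: g_def case_prod_unfold)
  hence h2: "(g has_sum (wp z1 \<tau> - wp z2 \<tau>)) (UNIV :: (int \<times> int) set)"
    using has_sum_swap[of g "UNIV :: int set" "UNIV :: int set"] by (simp add: case_prod_unfold)
  have rows: "((\<lambda>m. g (n, m)) has_sum ((2 * of_real pi * \<i>)^2 * (FF (exp (2 * of_real pi * \<i> * (z1 - of_int n * \<tau>)))
                                          - FF (exp (2 * of_real pi * \<i> * (z2 - of_int n * \<tau>)))))) UNIV" for n
  proof -
    have a: "((\<lambda>m::int. 1 / ((z1 - of_int n * \<tau>) - of_int m)^2) has_sum ((2 * of_real pi * \<i>)^2 * FF (exp (2 * of_real pi * \<i> * (z1 - of_int n * \<tau>))))) UNIV"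
      by (rule S_has_sum[OF n1])
    have b: "((\<lambda>m::int. 1 / ((z2 - of_int n * \<tau>) - of_int m)^2) has_sum ((2 * of_real pi * \<i>)^2 * FF (exp (2 * of_real pi * \<i> * (z2 - of_int n * \<tau>))))) UNIV"
      by (rule S_has_sum[OF n2])
    have "\<And>m. g (n, m) = 1 / ((z1 - of_int n * \<tau>) - of_int m)^2 - 1 / ((z2 - of_int n * \<tau>) - of_int m)^2"
      by (simp add: g_def omega_def algebra_simps)
    thus ?thesis using my_has_sum_diff[OF a b] by (simp add: right_diff_distrib)
  qed
  have h3: "(g has_sum (wp z1 \<tau> - wp z2 \<tau>)) (Sigma UNIV (\<lambda>_. UNIV))" using h2 by simp
  show ?thesis by (rule has_sum_Sigma'[OF h3]) (use rows in simp)
qed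

definition TT :: "complex \<Rightarrow> nat \<Rightarrow> int \<Rightarrow> complex \<Rightarrow> complex" where
  "TT \<zeta> b e Q = (if e > 0 then \<zeta> * Q ^ nat (e - int b) / (1 - \<zeta> * Q ^ nat e)^2
                else if e < 0 then inverse \<zeta> * Q ^ nat (- e - int b) / (1 - inverse \<zeta> * Q ^ nat (- e))^2
                else FF \<zeta>)"

lemma pow_lt1: "norm (Q::complex) < 1 \<Longrightarrow> k > 0 \<Longrightarrow> norm (Q ^ k) < 1"
  by (simp add: norm_power power_less_one_iff)

lemma alg2:
  fixes z P :: complex
  assumes z0: "z \<noteq> 0" and zP: "P \<noteq> z"
  shows "z * P / (P - z)^2 = inverse z * P / (1 - inverse z * P)^2"
proof -
  have d1: "z - P \<noteq> 0" "P - z \<noteq> 0" using zP by auto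
  have e1: "1 - inverse z * P = (z - P) / z" using z0 by (simp add: divide_inverse right_diff_distrib mult.commute)
  have e2: "(P - z)^2 = (z - P)^2" by (simp add: power2_eq_square algebra_simps)
  show ?thesis unfolding e1 e2 using z0 d1 by (simp add: field_simps power2_eq_square)
qed

lemma TT_FF:
  assumes z: "norm \<zeta> = 1" and Q0: "Q \<noteq> 0" and Q1: "norm Q < 1"
    and b: "int b \<le> \<bar>e\<bar>" and e0: "e = 0 \<Longrightarrow> b = 0"
  shows "FF (\<zeta> * Q powi e) = Q ^ b * TT \<zeta> b e Q"
proof (cases "e > 0")
  case True
  have "nat e = b + nat (e - int b)" using True b by linarith
  hence pw: "Q ^ nat e = Q ^ b * Q ^ nat (e - int b)" by (metis power_add)
  have "Q powi e = Q ^ nat e" using True by (simp add: power_int_def)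
  thus ?thesis using True by (simp add: TT_def FF_def pw)
next
  case False
  show ?thesis
  proof (cases "e < 0")
    case True
    define k where "k = nat (- e)"
    have "k = b + nat (- e - int b)" using True b unfolding k_def by linarith
    hence pw: "Q ^ k = Q ^ b * Q ^ nat (- e - int b)" by (metis power_add)
    have pe: "Q powi e = inverse (Q ^ k)" using True unfolding k_def by (simp add: power_int_def power_inverse)
    have P0: "Q ^ k \<noteq> 0" using Q0 by simp
    have z0: "\<zeta> \<noteq> 0" using z by auto
    have "norm (Q ^ k) < 1" using pow_lt1[OF Q1, of k] True unfolding k_def by simp
    hence Pz: "Q ^ k \<noteq> \<zeta>" using z by auto
    have Pz': "\<zeta> - Q ^ k \<noteq> 0" "Q ^ k - \<zeta> \<noteq> 0" using Pz by auto
    have "FF (\<zeta> * Q powi e) = \<zeta> * Q ^ k / (Q ^ k - \<zeta>)^2"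
      unfolding FF_def pe using P0 z0 Pz' by (simp add: field_simps power2_eq_square)
    also have "\<dots> = inverse \<zeta> * Q ^ k / (1 - inverse \<zeta> * Q ^ k)^2"
      using alg2[OF z0 Pz] .
    also have "\<dots> = Q ^ b * (inverse \<zeta> * Q ^ nat (- e - int b) / (1 - inverse \<zeta> * Q ^ k)^2)"
      by (subst (1) pw) simp
    finally show ?thesis using True False unfolding TT_def k_def by simp
  next
    case False2: False
    hence "e = 0" using False by simp
    thus ?thesis using e0 by (simp add: TT_def)
  qed
qed

lemma denom_bound:
  assumes "norm (x::complex) \<le> 1/2"
  shows "norm (1 - x) \<ge> 1/2"
  using norm_triangle_ineq2[of 1 x] assms by (simp add: norm_minus_commute) 

lemma pow_half:
  assumes "norm (Q::complex) \<le> 1/2" "k > 0"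
  shows "norm (Q ^ k) \<le> 1/2"
proof -
  have "norm (Q ^ k) = norm Q ^ k" by (simp add: norm_power)
  also have "\<dots> \<le> norm Q ^ 1" using assms by (intro power_decreasing) auto
  finally show ?thesis using assms by simp
qed

lemma TT_bound:
  assumes z: "norm \<zeta> = 1" and Q: "norm Q \<le> 1/2" and e: "e \<noteq> 0" and b: "int b \<le> \<bar>e\<bar>"
  shows "norm (TT \<zeta> b e Q) \<le> 4 * (1/2) ^ nat (\<bar>e\<bar> - int b)"
proof -
  have key: "norm (u * Q ^ j / (1 - u * Q ^ k)^2) \<le> 4 * (1/2) ^ j" if u: "norm u = 1" and k: "k > 0" for u j k
  proof -
    have "norm (u * Q ^ k) \<le> 1/2" using pow_half[OF Q k] u by (simp add: norm_mult)
    hence d: "norm (1 - u * Q ^ k) \<ge> 1/2" by (rule denom_bound)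
    have "norm (u * Q ^ j) \<le> (1/2) ^ j" using u Q by (simp add: norm_mult norm_power power_mono)
    have "norm (u * Q ^ j / (1 - u * Q ^ k)^2) = norm (u * Q ^ j) / norm (1 - u * Q ^ k) ^ 2"
      by (simp add: norm_divide norm_power)
    also have "\<dots> \<le> (1/2) ^ j / (1/2) ^ 2"
      using \<open>norm (u * Q ^ j) \<le> (1/2) ^ j\<close> d by (intro frac_le power_mono) auto
    also have "\<dots> = 4 * (1/2) ^ j" by (simp add: field_simps)
    finally show ?thesis .
  qed
  show ?thesis
  proof (cases "e > 0")
    case True
    thus ?thesis using key[OF z, of "nat e" "nat (e - int b)"] by (simp add: TT_def)
  next
    case False
    hence "e < 0" using e by simp
    moreover have "norm (inverse \<zeta>) = 1" using z by (simp add: norm_inverse)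
    ultimately show ?thesis using key[of "inverse \<zeta>" "nat (- e)" "nat (- e - int b)"] by (simp add: TT_def)
  qed
qed

lemma TT_zero:
  assumes "int b \<le> \<bar>e\<bar>"
  shows "TT \<zeta> b e 0 = (if e > 0 then (if e = int b then \<zeta> else 0)
                  else if e < 0 then (if - e = int b then inverse \<zeta> else 0) else FF \<zeta>)"
  using assms by (auto simp: TT_def zero_power power_0_left)

lemma TT_holo:
  assumes z: "norm \<zeta> = 1"
  shows "TT \<zeta> b e holomorphic_on ball 0 1"
proof -
  have nz: "1 - u * Q ^ k \<noteq> 0" if "norm u = 1" "k > 0" "Q \<in> ball 0 1" for u Q :: complex and k :: nat
  proof -
    have "norm (u * Q ^ k) < 1" using pow_lt1[of Q k] that by (simp add: norm_mult)
    thus ?thesis by auto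
  qed
  show ?thesis
  proof (cases "e > 0")
    case True
    hence "TT \<zeta> b e = (\<lambda>Q. \<zeta> * Q ^ nat (e - int b) / (1 - \<zeta> * Q ^ nat e)^2)"
      by (auto simp: TT_def)
    moreover have "(\<lambda>Q. \<zeta> * Q ^ nat (e - int b) / (1 - \<zeta> * Q ^ nat e)^2) holomorphic_on ball 0 1"
      using nz[OF z] True by (intro holomorphic_intros) auto
    ultimately show ?thesis by simp
  next
    case False
    show ?thesis
    proof (cases "e < 0")
      case True
      hence "TT \<zeta> b e = (\<lambda>Q. inverse \<zeta> * Q ^ nat (- e - int b) / (1 - inverse \<zeta> * Q ^ nat (- e))^2)"
        by (auto simp: TT_def)
      moreover have "norm (inverse \<zeta>) = 1" using z by (simp add: norm_inverse)
      moreover have "(\<lambda>Q. inverse \<zeta> * Q ^ nat (- e - int b) / (1 - inverse \<zeta> * Q ^ nat (- e))^2) holomorphic_on ball 0 1"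
        using nz[OF \<open>norm (inverse \<zeta>) = 1\<close>] True by (intro holomorphic_intros) auto
      ultimately show ?thesis by simp
    next
      case False2: False
      hence "TT \<zeta> b e = (\<lambda>Q. FF \<zeta>)" using False by (auto simp: TT_def)
      thus ?thesis by simp
    qed
  qed
qed

lemma half_pow_bound:
  assumes "int k \<le> \<bar>e\<bar>" "int b \<le> \<bar>e\<bar>"
  shows "(1/2::real) ^ nat (\<bar>e\<bar> - int b) \<le> 2 ^ b * (1/2) ^ k"
proof -
  have "nat \<bar>e\<bar> = nat (\<bar>e\<bar> - int b) + b" using assms by linarith
  hence "(1/2::real) ^ nat \<bar>e\<bar> = (1/2) ^ nat (\<bar>e\<bar> - int b) * (1/2) ^ b" by (metis power_add)
  hence eq: "(1/2::real) ^ nat (\<bar>e\<bar> - int b) = 2 ^ b * (1/2) ^ nat \<bar>e\<bar>"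
    by (simp add: power_one_over field_simps)
  have "(1/2::real) ^ nat \<bar>e\<bar> \<le> (1/2) ^ k" using assms by (intro power_decreasing) auto
  thus ?thesis unfolding eq by simp
qed

lemma series_T:
  fixes \<zeta> :: complex and b :: nat and e :: "nat \<Rightarrow> int"
  assumes z: "norm \<zeta> = 1"
    and H1: "\<And>k. int b \<le> \<bar>e k\<bar>"
    and H2: "\<And>k. k \<ge> 1 \<Longrightarrow> \<bar>e k\<bar> > int b \<and> int k \<le> \<bar>e k\<bar>"
    and H3: "e 0 = 0 \<Longrightarrow> b = 0"
  shows "\<exists>g. g holomorphic_on ball 0 (1/2) \<and> g 0 = TT \<zeta> b (e 0) 0 \<and>
           (\<forall>Q. Q \<noteq> 0 \<and> norm Q < 1/2 \<longrightarrow> ((\<lambda>k. FF (\<zeta> * Q powi e k)) has_sum (Q ^ b * g Q)) UNIV)"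
proof -
  define S :: "complex set" where "S = ball 0 (1/2)"
  define f where "f k = TT \<zeta> b (e k)" for k
  define h :: "nat \<Rightarrow> real" where "h k = 4 * (2 ^ b * (1/2) ^ k)" for k
  have hol: "f k holomorphic_on ball 0 1" for k unfolding f_def by (rule TT_holo[OF z])
  have hfd: "\<And>n x. x \<in> S \<Longrightarrow> (f n has_field_derivative deriv (f n) x) (at x)"
    by (rule holomorphic_derivI[OF hol]) (auto simp: S_def)
  have hs: "summable h" unfolding h_def by (intro summable_mult summable_geometric) auto
  have bnd: "norm (f k x) \<le> h k" if "k \<ge> 1" "norm x \<le> 1/2" for k x
  proof -
    have "e k \<noteq> 0" using H2[OF that(1)] by auto
    hence "norm (f k x) \<le> 4 * (1/2) ^ nat (\<bar>e k\<bar> - int b)"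
      unfolding f_def using TT_bound[OF z that(2) _ H1] by blast
    also have "\<dots> \<le> 4 * (2 ^ b * (1/2) ^ k)"
      using half_pow_bound[of k "e k" b] H2[OF that(1)] H1[of k] by simp
    finally show ?thesis unfolding h_def .
  qed
  have to_g: "\<forall>\<^sub>F n in sequentially. \<forall>x\<in>S. norm (f n x) \<le> h n"
    using eventually_ge_at_top[of 1] by eventually_elim (auto simp: S_def intro!: bnd)
  obtain g g' where gg: "\<forall>x \<in> S. ((\<lambda>n. f n x) sums g x) \<and> ((\<lambda>n. deriv (f n) x) sums g' x) \<and> (g has_field_derivative g' x) (at x)"
    using series_and_derivative_comparison[OF _ hs hfd to_g] by (metis S_def open_ball)
  have gh: "g holomorphic_on S"
    using gg by (subst holomorphic_on_open) (auto simp: S_def)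
  have "0 \<in> S" by (simp add: S_def)
  hence s0: "(\<lambda>n. f n 0) sums g 0" using gg by blast
  have fz: "f n 0 = (if n = 0 then f 0 0 else 0)" for n
  proof (cases "n = 0")
    case False
    hence "n \<ge> 1" by simp
    from H2[OF this] show ?thesis using False unfolding f_def by (subst TT_zero) auto
  qed simp
  have fe: "(\<lambda>n. f n 0) = (\<lambda>n. if n = 0 then f 0 0 else 0)" by (rule ext) (rule fz)
  have "(\<lambda>n. if n = 0 then f 0 0 else 0) sums f 0 0" using sums_single[of 0 "\<lambda>_. f 0 0"] by simp
  hence "(\<lambda>n. f n 0) sums f 0 0" unfolding fe .
  hence "g 0 = f 0 0" using sums_unique2[OF s0] by simp
  hence g0: "g 0 = TT \<zeta> b (e 0) 0" unfolding f_def .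
  have main: "((\<lambda>k. FF (\<zeta> * Q powi e k)) has_sum (Q ^ b * g Q)) UNIV" if Q: "Q \<noteq> 0" "norm Q < 1/2" for Q
  proof -
    have "Q \<in> S" using Q by (simp add: S_def)
    hence "(\<lambda>n. f n Q) sums g Q" using gg by blast
    hence s1: "(\<lambda>n. Q ^ b * f n Q) sums (Q ^ b * g Q)" by (rule sums_mult)
    have H3': "e k = 0 \<Longrightarrow> b = 0" for k
    proof (cases "k = 0")
      case True thus "e k = 0 \<Longrightarrow> b = 0" using H3 by simp
    next
      case False thus "e k = 0 \<Longrightarrow> b = 0" using H2[of k] by simp
    qed
    have eq: "FF (\<zeta> * Q powi e k) = Q ^ b * f k Q" for k
      unfolding f_def by (rule TT_FF[OF z Q(1) _ H1 H3']) (use Q in auto)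
    have "norm (Q ^ b) \<le> 1" using Q by (simp add: norm_power power_le_one)
    hence nb: "norm (Q ^ b * f k Q) \<le> h k" if "k \<ge> 1" for k
      using bnd[OF that, of Q] Q
      by (simp add: norm_mult) (smt (verit, best) mult_left_le_one_le norm_ge_zero)
    have "summable (\<lambda>k. norm (Q ^ b * f k Q))"
      by (rule summable_comparison_test_ev[OF _ hs])
         (use eventually_ge_at_top[of 1] in \<open>eventually_elim, use nb in auto\<close>)
    from norm_summable_imp_has_sum[OF this s1] show ?thesis by (simp add: eq)
  qed
  show ?thesis using gh g0 main unfolding S_def by blast
qed

lemma Phi_rep:
  fixes \<zeta> :: complex and c M :: int
  assumes z: "norm \<zeta> = 1" and M: "M > 0" and c0: "0 \<le> c" and cM: "c < M"
  shows "\<exists>g. g holomorphic_on ball 0 (1/2) \<and>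
            g 0 = TT \<zeta> (nat (min c (M - c))) c 0 + TT \<zeta> (nat (min c (M - c))) (c - M) 0 \<and>
           (\<forall>Q. Q \<noteq> 0 \<and> norm Q < 1/2 \<longrightarrow>
              ((\<lambda>n::int. FF (\<zeta> * Q powi (c + n * M))) has_sum (Q ^ nat (min c (M - c)) * g Q)) UNIV)"
proof -
  define b where "b = nat (min c (M - c))"
  have ib: "int b = min c (M - c)" using c0 cM by (simp add: b_def)
  have kM: "int k \<le> int k * M" for k using mult_left_mono[of 1 M "int k"] M by simp
  have kM2: "M \<le> int k * M" if "k \<ge> 1" for k using mult_right_mono[of 1 "int k" M] M that by simp
  define eA where "eA k = c + int k * M" for k
  define eB where "eB k = c + (- int k - 1) * M" for k
  have eB': "eB k = c - int k * M - M" for k by (simp add: eB_def algebra_simps)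
  obtain gA where gA: "gA holomorphic_on ball 0 (1/2)" "gA 0 = TT \<zeta> b (eA 0) 0"
    "\<And>Q. Q \<noteq> 0 \<and> norm Q < 1/2 \<Longrightarrow> ((\<lambda>k. FF (\<zeta> * Q powi eA k)) has_sum (Q ^ b * gA Q)) UNIV"
  proof -
    have "\<exists>g. g holomorphic_on ball 0 (1/2) \<and> g 0 = TT \<zeta> b (eA 0) 0 \<and>
           (\<forall>Q. Q \<noteq> 0 \<and> norm Q < 1/2 \<longrightarrow> ((\<lambda>k. FF (\<zeta> * Q powi eA k)) has_sum (Q ^ b * g Q)) UNIV)"
    proof (rule series_T[OF z])
      show "int b \<le> \<bar>eA k\<bar>" for k using ib kM[of k] c0 M unfolding eA_def by linarith
      show "int b < \<bar>eA k\<bar> \<and> int k \<le> \<bar>eA k\<bar>" if "k \<ge> 1" for k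
        using ib kM[of k] kM2[OF that] c0 cM unfolding eA_def by linarith
      show "eA 0 = 0 \<Longrightarrow> b = 0" using ib c0 cM unfolding eA_def by auto
    qed
    thus ?thesis using that by blast
  qed
  obtain gB where gB: "gB holomorphic_on ball 0 (1/2)" "gB 0 = TT \<zeta> b (eB 0) 0"
    "\<And>Q. Q \<noteq> 0 \<and> norm Q < 1/2 \<Longrightarrow> ((\<lambda>k. FF (\<zeta> * Q powi eB k)) has_sum (Q ^ b * gB Q)) UNIV"
  proof -
    have "\<exists>g. g holomorphic_on ball 0 (1/2) \<and> g 0 = TT \<zeta> b (eB 0) 0 \<and>
           (\<forall>Q. Q \<noteq> 0 \<and> norm Q < 1/2 \<longrightarrow> ((\<lambda>k. FF (\<zeta> * Q powi eB k)) has_sum (Q ^ b * g Q)) UNIV)"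
    proof (rule series_T[OF z])
      show "int b \<le> \<bar>eB k\<bar>" for k using ib kM[of k] c0 cM M unfolding eB' by linarith
      show "int b < \<bar>eB k\<bar> \<and> int k \<le> \<bar>eB k\<bar>" if "k \<ge> 1" for k
        using ib kM[of k] kM2[OF that] c0 cM unfolding eB' by linarith
      show "eB 0 = 0 \<Longrightarrow> b = 0" using cM unfolding eB' by auto
    qed
    thus ?thesis using that by blast
  qed
  define g where "g Q = gA Q + gB Q" for Q
  have "g holomorphic_on ball 0 (1/2)" unfolding g_def using gA(1) gB(1) by (intro holomorphic_intros)
  moreover have "g 0 = TT \<zeta> b c 0 + TT \<zeta> b (c - M) 0"
    unfolding g_def gA(2) gB(2) by (simp add: eA_def eB_def algebra_simps)
  moreover have "((\<lambda>n::int. FF (\<zeta> * Q powi (c + n * M))) has_sum (Q ^ b * g Q)) UNIV"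
    if Q: "Q \<noteq> 0" "norm Q < 1/2" for Q
  proof -
    have "((\<lambda>n::int. FF (\<zeta> * Q powi (c + n * M))) has_sum (Q ^ b * gA Q + Q ^ b * gB Q)) UNIV"
      by (rule has_sum_int_split) (use gA(3)[OF conjI[OF Q]] gB(3)[OF conjI[OF Q]] in \<open>simp_all add: eA_def eB_def\<close>)
    thus ?thesis by (simp add: g_def distrib_left)
  qed
  ultimately show ?thesis unfolding b_def by blast
qed

lemma Phi_shift:
  fixes F :: "int \<Rightarrow> complex" and A M :: int
  assumes M: "M > 0"
  shows "((\<lambda>n::int. F (A - n * M)) has_sum X) UNIV \<longleftrightarrow> ((\<lambda>n. F (A mod M + n * M)) has_sum X) UNIV"
proof -
  have bij: "bij_betw (\<lambda>n. A div M - n) (UNIV :: int set) UNIV"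
    by (rule bij_betwI[of _ _ _ "\<lambda>n. A div M - n"]) auto
  have eq: "A mod M + (A div M - n) * M = A - n * M" for n
    using div_mult_mod_eq[of A M] by (simp add: algebra_simps)
  show ?thesis
    using has_sum_reindex_bij_betw[OF bij, of "\<lambda>n. F (A mod M + n * M)" X] by (simp add: eq)
qed

lemma moebius_denom_nz:
  fixes p q r s :: int and \<tau> :: complex
  assumes det: "p * s - q * r = 1" and y: "Im \<tau> > 0"
  shows "of_int r * \<tau> + of_int s \<noteq> 0"
proof (cases "r = 0")
  case True
  hence "p * s = 1" using det by simp
  hence "s \<noteq> 0" by auto
  thus ?thesis using True by simp
next
  case False
  have "Im (of_int r * \<tau> + of_int s) = of_int r * Im \<tau>" by simp
  also have "\<dots> \<noteq> 0" using False y by simp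
  finally have "Im (of_int r * \<tau> + of_int s) \<noteq> 0" .
  thus ?thesis by (metis zero_complex.sel(2))
qed

lemma moebius_Im_pos:
  fixes p q r s :: int and \<tau> :: complex
  assumes det: "p * s - q * r = 1" and y: "Im \<tau> > 0"
  shows "Im (moebius p q r s \<tau>) > 0"
proof -
  define j where "j = of_int r * \<tau> + of_int s"
  have j0: "j \<noteq> 0" unfolding j_def by (rule moebius_denom_nz[OF det y])
  have d: "(Re j)\<^sup>2 + (Im j)\<^sup>2 > 0" using j0
    by (metis complex_eq_iff zero_complex.simps(1) zero_complex.simps(2) add_pos_nonneg add_nonneg_pos
        zero_less_power2 zero_le_power2 add_nonneg_nonneg order_le_less)
  have num: "Im (of_int p * \<tau> + of_int q) * Re j - Re (of_int p * \<tau> + of_int q) * Im j = Im \<tau>"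
  proof -
    have "Im (of_int p * \<tau> + of_int q) * Re j - Re (of_int p * \<tau> + of_int q) * Im j
        = of_int (p * s - q * r) * Im \<tau>"
      unfolding j_def by (simp add: algebra_simps)
    thus ?thesis using det by simp
  qed
  have "Im (moebius p q r s \<tau>) = Im \<tau> / ((Re j)\<^sup>2 + (Im j)\<^sup>2)"
    unfolding moebius_def j_def[symmetric] Im_divide num ..
  thus ?thesis using d y by simp
qed

lemma wp_homog:
  fixes p q r s :: int and \<tau> x :: complex
  assumes det: "p * s - q * r = 1" and y: "Im \<tau> > 0"
  shows "wp x (moebius p q r s \<tau>) = (of_int r * \<tau> + of_int s)^2 * wp (x * (of_int r * \<tau> + of_int s)) \<tau>"
proof -
  define j where "j = of_int r * \<tau> + of_int s"
  have j0: "j \<noteq> 0" unfolding j_def by (rule moebius_denom_nz[OF det y])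
  define \<tau>' where "\<tau>' = moebius p q r s \<tau>"
  define \<phi> :: "int \<times> int \<Rightarrow> int \<times> int" where "\<phi> = (\<lambda>(m,n). (m * s + n * q, m * r + n * p))"
  define \<psi> :: "int \<times> int \<Rightarrow> int \<times> int" where "\<psi> = (\<lambda>(a,b). (a * p - b * q, - a * r + b * s))"
  define h where "h = (\<lambda>(m,n). 1 / (x * j - (of_int m + of_int n * \<tau>))^2 - 1 / (of_int m + of_int n * \<tau>)^2)"
  define h' where "h' = (\<lambda>(m,n). 1 / (x - (of_int m + of_int n * \<tau>'))^2 - 1 / (of_int m + of_int n * \<tau>')^2)"
  have om: "of_int m + of_int n * \<tau>' = (case \<phi> (m,n) of (a,b) \<Rightarrow> of_int a + of_int b * \<tau>) / j" for m n
    unfolding \<tau>'_def moebius_def \<phi>_def j_def[symmetric] using j0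
    by (simp add: field_simps j_def)
  have hh: "h' k = j^2 * h (\<phi> k)" for k
  proof -
    obtain m n where k: "k = (m,n)" by fastforce
    obtain a b where ab: "\<phi> (m,n) = (a,b)" by fastforce
    define w where "w = of_int a + of_int b * \<tau>"
    have o: "of_int m + of_int n * \<tau>' = w / j" using om[of m n] ab by (simp add: w_def)
    have e1: "1 / (x - w / j)^2 = j^2 * (1 / (x * j - w)^2)"
    proof -
      have "x - w / j = (x * j - w) / j" using j0 by (simp add: field_simps)
      thus ?thesis by (simp add: power_divide)
    qed
    have e2: "1 / (w / j)^2 = j^2 * (1 / w^2)" by (simp add: power_divide)
    show ?thesis unfolding k h'_def h_def ab using o e1 e2 by (simp add: w_def right_diff_distrib)
  qed
  have bij: "bij_betw \<phi> (UNIV - {(0,0)}) (UNIV - {(0,0)})"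
  proof (rule bij_betwI[of _ _ _ \<psi>])
    have inv1: "\<psi> (\<phi> k) = k" for k
    proof -
      obtain m n where k: "k = (m,n)" by fastforce
      have "(m * s + n * q) * p - (m * r + n * p) * q = m * (p * s - q * r)" by (simp add: algebra_simps)
      hence c1: "(m * s + n * q) * p - (m * r + n * p) * q = m" using det by simp
      have "- (m * s + n * q) * r + (m * r + n * p) * s = n * (p * s - q * r)" by (simp add: algebra_simps)
      hence c2: "- (m * s + n * q) * r + (m * r + n * p) * s = n" using det by simp
      show ?thesis unfolding k \<phi>_def \<psi>_def by (simp only: case_prod_conv c1 c2)
    qed
    have inv2: "\<phi> (\<psi> k) = k" for k
    proof -
      obtain a b where k: "k = (a,b)" by fastforce
      have "(a * p - b * q) * s + (- a * r + b * s) * q = a * (p * s - q * r)" by (simp add: algebra_simps)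
      hence c1: "(a * p - b * q) * s + (- a * r + b * s) * q = a" using det by simp
      have "(a * p - b * q) * r + (- a * r + b * s) * p = b * (p * s - q * r)" by (simp add: algebra_simps)
      hence c2: "(a * p - b * q) * r + (- a * r + b * s) * p = b" using det by simp
      show ?thesis unfolding k \<phi>_def \<psi>_def by (simp only: case_prod_conv c1 c2)
    qed
    have z1: "\<phi> (0,0) = (0,0)" "\<psi> (0,0) = (0,0)" by (simp_all add: \<phi>_def \<psi>_def)
    show "\<phi> \<in> UNIV - {(0, 0)} \<rightarrow> UNIV - {(0, 0)}"
    proof (rule Pi_I)
      fix k assume k: "k \<in> UNIV - {(0::int, 0::int)}"
      have "\<phi> k \<noteq> (0, 0)"
      proof
        assume "\<phi> k = (0, 0)"
        hence "\<psi> (\<phi> k) = (0, 0)" using z1 by simp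
        thus False using k inv1[of k] by simp
      qed
      thus "\<phi> k \<in> UNIV - {(0, 0)}" by simp
    qed
    show "\<psi> \<in> UNIV - {(0, 0)} \<rightarrow> UNIV - {(0, 0)}"
    proof (rule Pi_I)
      fix k assume k: "k \<in> UNIV - {(0::int, 0::int)}"
      have "\<psi> k \<noteq> (0, 0)"
      proof
        assume "\<psi> k = (0, 0)"
        hence "\<phi> (\<psi> k) = (0, 0)" using z1 by simp
        thus False using k inv2[of k] by simp
      qed
      thus "\<psi> k \<in> UNIV - {(0, 0)}" by simp
    qed
    show "\<psi> (\<phi> k) = k" for k by (rule inv1)
    show "\<phi> (\<psi> k) = k" for k by (rule inv2)
  qed
  have "infsum h' (UNIV - {(0,0)}) = infsum (\<lambda>k. j^2 * h (\<phi> k)) (UNIV - {(0,0)})"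
    by (rule infsum_cong) (rule hh)
  also have "\<dots> = j^2 * infsum (\<lambda>k. h (\<phi> k)) (UNIV - {(0,0)})" by (rule infsum_cmult_right')
  also have "infsum (\<lambda>k. h (\<phi> k)) (UNIV - {(0,0)}) = infsum h (UNIV - {(0,0)})"
    by (rule infsum_reindex_bij_betw[OF bij])
  finally have I: "infsum h' (UNIV - {(0,0)}) = j^2 * infsum h (UNIV - {(0,0)})" .
  have W1: "wp x \<tau>' = 1 / x^2 + infsum h' (UNIV - {(0,0)})" unfolding wp_def h'_def ..
  have W2: "wp (x * j) \<tau> = 1 / (x * j)^2 + infsum h (UNIV - {(0,0)})" unfolding wp_def h_def ..
  have "j^2 * (1 / (x * j)^2) = 1 / x^2" using j0 by (cases "x = 0") (simp_all add: field_simps power_mult_distrib)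
  hence "wp x \<tau>' = j^2 * wp (x * j) \<tau>" unfolding W1 W2 I by (simp add: distrib_left)
  thus ?thesis unfolding \<tau>'_def j_def .
qed

definition KK :: "complex \<Rightarrow> int \<Rightarrow> int \<Rightarrow> complex" where
  "KK \<zeta> c M = (if c = 0 then FF \<zeta> else (if c = min c (M - c) then \<zeta> else 0))
              + (if M - c = min c (M - c) then inverse \<zeta> else 0)"

lemma KK_eq:
  assumes "0 \<le> c" "c < M"
  shows "TT \<zeta> (nat (min c (M - c))) c 0 + TT \<zeta> (nat (min c (M - c))) (c - M) 0 = KK \<zeta> c M"
proof -
  have a: "int (nat (min c (M - c))) = min c (M - c)" using assms by simp
  have "TT \<zeta> (nat (min c (M - c))) c 0 = (if c = 0 then FF \<zeta> else (if c = min c (M - c) then \<zeta> else 0))"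
    using assms by (subst TT_zero) (auto simp: a)
  moreover have "TT \<zeta> (nat (min c (M - c))) (c - M) 0 = (if M - c = min c (M - c) then inverse \<zeta> else 0)"
    using assms by (subst TT_zero) (auto simp: a)
  ultimately show ?thesis unfolding KK_def by simp
qed

lemma FF_nz: "x \<noteq> 0 \<Longrightarrow> x \<noteq> 1 \<Longrightarrow> FF x \<noteq> 0"
  by (simp add: FF_def)

lemma FF_diff:
  assumes "x \<noteq> 1" "y \<noteq> 1"
  shows "FF x - FF y = (x - y) * (1 - x * y) / ((1 - x)^2 * (1 - y)^2)"
proof -
  have A: "(1 - x)^2 \<noteq> 0" and B: "(1 - y)^2 \<noteq> 0" using assms by auto
  have "FF x - FF y = (x * (1 - y)^2 - y * (1 - x)^2) / ((1 - x)^2 * (1 - y)^2)"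
    unfolding FF_def using diff_frac_eq[OF A B, of x y] by simp
  also have "x * (1 - y)^2 - y * (1 - x)^2 = (x - y) * (1 - x * y)"
    by (simp add: power2_eq_square algebra_simps)
  finally show ?thesis .
qed

lemma FF_inj:
  assumes "x \<noteq> 1" "y \<noteq> 1" "x \<noteq> y" "x * y \<noteq> 1"
  shows "FF x \<noteq> FF y"
proof -
  have "1 - x \<noteq> 0" "1 - y \<noteq> 0" "x - y \<noteq> 0" "1 - x * y \<noteq> 0" using assms by auto
  hence "FF x - FF y \<noteq> 0" unfolding FF_diff[OF assms(1,2)] by simp
  thus ?thesis by simp
qed

lemma KK_single_nz:
  assumes c: "0 \<le> c" "c < M" and b: "2 * min c (M - c) < M" and z: "\<zeta> \<noteq> 0" and z1: "c = 0 \<Longrightarrow> \<zeta> \<noteq> 1"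
  shows "KK \<zeta> c M \<noteq> 0"
proof (cases "c = 0")
  case True
  thus ?thesis using z z1 c FF_nz[of \<zeta>] by (simp add: KK_def)
next
  case False
  show ?thesis
  proof (cases "c \<le> M - c")
    case True
    hence "c = min c (M - c)" "M - c \<noteq> min c (M - c)" using b by auto
    thus ?thesis using False z by (simp add: KK_def)
  next
    case False2: False
    hence "c \<noteq> min c (M - c)" "M - c = min c (M - c)" by auto
    thus ?thesis using False z by (simp add: KK_def)
  qed
qed

lemma KK_pair_nz:
  fixes \<zeta>1 \<zeta>2 :: complex and c1 c2 M :: int
  assumes c1: "0 \<le> c1" "c1 < M" and c2: "0 \<le> c2" "c2 < M"
    and z1: "\<zeta>1 \<noteq> 0" and z2: "\<zeta>2 \<noteq> 0"
    and h1: "c1 = 0 \<Longrightarrow> \<zeta>1 \<noteq> 1" and h2: "c2 = 0 \<Longrightarrow> \<zeta>2 \<noteq> 1"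
    and hp: "c1 = c2 \<Longrightarrow> \<zeta>1 \<noteq> \<zeta>2"
    and hm: "c1 + c2 = 0 \<or> c1 + c2 = M \<Longrightarrow> \<zeta>1 * \<zeta>2 \<noteq> 1"
  defines "b1 \<equiv> min c1 (M - c1)" and "b2 \<equiv> min c2 (M - c2)"
  shows "(if b1 = min b1 b2 then KK \<zeta>1 c1 M else 0) - (if b2 = min b1 b2 then KK \<zeta>2 c2 M else 0) \<noteq> 0"
proof -
  have b1M: "2 * b1 \<le> M" unfolding b1_def min_def by auto
  have b2M: "2 * b2 \<le> M" unfolding b2_def min_def by auto
  consider "b1 < b2" | "b2 < b1" | "b1 = b2" by linarith
  thus ?thesis
  proof cases
    case 1
    have "KK \<zeta>1 c1 M \<noteq> 0" by (rule KK_single_nz[OF c1 _ z1 h1]) (use 1 b2M b1_def in auto)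
    thus ?thesis using 1 by simp
  next
    case 2
    have "KK \<zeta>2 c2 M \<noteq> 0" by (rule KK_single_nz[OF c2 _ z2 h2]) (use 2 b1M b2_def in auto)
    thus ?thesis using 2 by simp
  next
    case 3
    have i1: "inverse \<zeta>1 \<noteq> 0" "inverse \<zeta>2 \<noteq> 0" using z1 z2 by auto
    have goal: "KK \<zeta>1 c1 M \<noteq> KK \<zeta>2 c2 M"
    proof -
      consider "b1 = 0" | "b1 > 0" "2 * b1 < M" | "2 * b1 = M" using b1M c1 unfolding b1_def by linarith
      thus ?thesis
      proof cases
        case 1
        hence "c1 = 0" "c2 = 0" using 3 c1 c2 unfolding b1_def b2_def by auto
        hence K: "KK \<zeta>1 c1 M = FF \<zeta>1" "KK \<zeta>2 c2 M = FF \<zeta>2" using c1 by (auto simp: KK_def)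
        show ?thesis unfolding K using \<open>c1 = 0\<close> \<open>c2 = 0\<close> h1 h2 hp hm by (intro FF_inj) auto
      next
        case 2
        have c1o: "c1 = b1 \<or> c1 = M - b1" and c2o: "c2 = b1 \<or> c2 = M - b1" using 3 unfolding b1_def b2_def by auto
        have ne: "b1 \<noteq> M - b1" using 2 by simp
        have K1: "KK \<zeta>1 c1 M = (if c1 = b1 then \<zeta>1 else inverse \<zeta>1)"
          using c1o 2 ne c1 unfolding KK_def b1_def by auto
        have K2: "KK \<zeta>2 c2 M = (if c2 = b1 then \<zeta>2 else inverse \<zeta>2)"
          using c2o 2 ne c2 3 unfolding KK_def b1_def b2_def by auto
        show ?thesis
        proof (cases "c1 = c2")
          case True
          hence "\<zeta>1 \<noteq> \<zeta>2" by (rule hp)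
          thus ?thesis unfolding K1 K2 using True by (auto simp: inverse_eq_iff_eq)
        next
          case False
          hence "c1 + c2 = M" using c1o c2o by auto
          hence m: "\<zeta>1 * \<zeta>2 \<noteq> 1" using hm by auto
          have "\<zeta>1 \<noteq> inverse \<zeta>2" using m z2 by (auto simp: field_simps)
          moreover have "inverse \<zeta>1 \<noteq> \<zeta>2" using m z1 by (auto simp: field_simps)
          ultimately show ?thesis unfolding K1 K2 using False c1o c2o by auto
        qed
      next
        case 4: 3
        have "c1 = b1" "c2 = b1" using 3 4 unfolding b1_def b2_def min_def by (auto split: if_splits)
        hence cc: "c1 = c2" "c1 + c2 = M" using 4 by auto
        have K1: "KK \<zeta>1 c1 M = \<zeta>1 + inverse \<zeta>1" using \<open>c1 = b1\<close> 4 c1 unfolding KK_def b1_def by auto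
        have K2: "KK \<zeta>2 c2 M = \<zeta>2 + inverse \<zeta>2" using \<open>c2 = b1\<close> 4 c2 3 unfolding KK_def b1_def b2_def by auto
        have n1: "\<zeta>1 - \<zeta>2 \<noteq> 0" using hp[OF cc(1)] by simp
        have n2: "\<zeta>1 * \<zeta>2 - 1 \<noteq> 0" using hm cc(2) by simp
        have "\<zeta>1 + inverse \<zeta>1 - (\<zeta>2 + inverse \<zeta>2) = (\<zeta>1 - \<zeta>2) * (\<zeta>1 * \<zeta>2 - 1) / (\<zeta>1 * \<zeta>2)"
          using z1 z2 by (simp add: field_simps)
        also have "\<dots> \<noteq> 0" using n1 n2 z1 z2 by simp
        finally show ?thesis unfolding K1 K2 by simp
      qed
    qed
    thus ?thesis using 3 by simp
  qed
qed

lemma brace_eq: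
  fixes N D n :: int
  assumes M: "N div D > 0"
  shows "brace N D n = min (n mod (N div D)) (N div D - n mod (N div D))"
proof -
  define M where "M = N div D"
  have Mp: "M > 0" using M by (simp add: M_def)
  define c where "c = n mod M"
  have c0: "0 \<le> c" and cM: "c < M" using Mp by (simp_all add: c_def)
  have nc: "n mod M = c" by (simp add: c_def)
  define P where "P x \<longleftrightarrow> 0 \<le> x \<and> 2 * x \<le> M \<and>
     (\<exists>\<mu> \<in> {1::int, -1}. [n = \<mu> * x] (mod M) \<and> ((x = 0 \<or> 2 * x = M) \<longrightarrow> \<mu> = 1))" for x
  have neg: "(- x) mod M = M - x" if "0 < x" "x < M" for x
  proof -
    have "x mod M = x" using that by (simp add: mod_pos_pos_trivial)
    thus ?thesis using that by (simp add: zmod_zminus1_eq_if)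
  qed
  have P0: "P (min c (M - c))"
  proof (cases "c \<le> M - c")
    case True
    hence "min c (M - c) = c" by simp
    moreover have "[n = 1 * c] (mod M)" unfolding cong_def using nc c0 cM by simp
    ultimately show ?thesis unfolding P_def using True c0 by auto
  next
    case False
    hence m: "min c (M - c) = M - c" by simp
    have "(- (M - c)) mod M = c" using neg[of "M - c"] False cM c0 by simp
    hence "[n = (-1) * (M - c)] (mod M)" unfolding cong_def using nc by simp
    thus ?thesis unfolding P_def m using False cM by auto
  qed
  have uniq: "x = min c (M - c)" if Px: "P x" for x
  proof -
    from Px obtain \<mu> where x0: "0 \<le> x" and x2: "2 * x \<le> M" and mu: "\<mu> \<in> {1, -1}"
      and cg: "[n = \<mu> * x] (mod M)" and side: "(x = 0 \<or> 2 * x = M) \<longrightarrow> \<mu> = 1"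
      unfolding P_def by blast
    have xM: "x < M" using x2 Mp by linarith
    show ?thesis
    proof (cases "\<mu> = 1")
      case True
      hence "c = x mod M" using cg nc unfolding cong_def by simp
      also have "x mod M = x" using x0 xM by (simp add: mod_pos_pos_trivial)
      finally have "c = x" .
      thus ?thesis using x2 by simp
    next
      case False
      hence mu': "\<mu> = -1" using mu by simp
      have xpos: "0 < x" "2 * x < M" using side False x0 x2 by auto
      have "c = (- x) mod M" using cg nc mu' unfolding cong_def by simp
      also have "\<dots> = M - x" using neg[of x] xpos xM by simp
      finally have "c = M - x" .
      thus ?thesis using xpos by simp
    qed
  qed
  have "brace N D n = (THE x. P x)" unfolding brace_def P_def M_def by simp
  also have "(THE x. P x) = min c (M - c)" using P0 uniq by (rule the_equality)
  finally show ?thesis unfolding c_def M_def .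
qed

lemma NT_basic:
  fixes N t r s p q :: int
  assumes N: "N > 0" and rt: "[r = t] (mod N)" and det: "p * s - q * r = 1"
  defines "D \<equiv> gcd t N"
  shows "D > 0" "D dvd N" "D dvd r" "D dvd t" "N = D * (N div D)" "r = D * (r div D)"
        "N div D > 0" "coprime (r div D) (N div D)" "coprime s D"
        "[r div D = t div D] (mod (N div D))"
proof -
  show Dp: "D > 0" using N by (simp add: D_def)
  show DN: "D dvd N" by (simp add: D_def)
  show Dt: "D dvd t" by (simp add: D_def)
  obtain k where k: "r = t + N * k" using rt by (metis cong_iff_lin cong_sym)
  show Dr: "D dvd r" using DN Dt k by simp
  show NDM: "N = D * (N div D)" using DN by simp
  show rD: "r = D * (r div D)" using Dr by simp
  show "N div D > 0" using N Dp NDM by (metis pos_imp_zdiv_pos_iff zdvd_imp_le DN)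
  have g: "gcd r N = D"
  proof -
    have "gcd N r = gcd N (k * N + t)" using k by (simp add: algebra_simps)
    also have "\<dots> = gcd N t" by (rule gcd_add_mult)
    finally show ?thesis unfolding D_def by (simp add: gcd.commute)
  qed
  show "coprime (r div D) (N div D)" using div_gcd_coprime[of r N] N unfolding g by simp
  show "coprime s D"
  proof (rule coprimeI)
    fix c assume cs: "c dvd s" and cD: "c dvd D"
    have "c dvd r" using cD Dr by (rule dvd_trans)
    hence "c dvd p * s - q * r" using cs by simp
    thus "is_unit c" using det by simp
  qed
  show "[r div D = t div D] (mod (N div D))"
  proof -
    have tD: "t = D * (t div D)" using Dt by simp
    have "D * (r div D) = D * (t div D) + D * ((N div D) * k)" using k rD tD NDM by (metis mult.assoc)
    hence "r div D = t div D + (N div D) * k" using Dp by (metis distrib_left mult_cancel_left less_irrefl)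
    thus ?thesis unfolding cong_iff_lin by (metis cong_iff_lin cong_sym)
  qed
qed

lemma NT_key:
  fixes N D M r' s A :: int
  assumes Dp: "D > 0" and Mp: "M > 0" and NDM: "N = D * M" and cop1: "coprime r' M" and cop2: "coprime s D"
    and nA: "\<not> [A = 0] (mod N)" and Ar: "[A * r' = 0] (mod M)"
  shows "\<not> [A * s = 0] (mod N)"
proof
  assume As: "[A * s = 0] (mod N)"
  have "M dvd A * r'" using Ar by (simp add: cong_0_iff)
  hence "M dvd A" using cop1 by (metis coprime_commute coprime_dvd_mult_left_iff)
  then obtain k where k: "A = M * k" by blast
  have "D * M dvd M * (k * s)" using As NDM k by (simp add: cong_0_iff mult.assoc)
  hence "D dvd k * s" using Mp by (simp add: mult.commute[of D M])
  hence "D dvd k" using cop2 by (metis coprime_commute coprime_dvd_mult_left_iff)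
  hence "N dvd A" using NDM k by (simp add: mult.commute[of D M] mult_dvd_mono)
  thus False using nA by (simp add: cong_0_iff)
qed

definition zeta :: "int \<Rightarrow> int \<Rightarrow> complex" where
  "zeta N k = exp (2 * of_real pi * \<i> * of_int k / of_int N)"

lemma zeta_mult: "zeta N k * zeta N l = zeta N (k + l)"
  unfolding zeta_def by (simp add: exp_add[symmetric] add_divide_distrib distrib_left)

lemma zeta_norm: "norm (zeta N k) = 1"
  unfolding zeta_def by (simp add: norm_exp_eq_Re)

lemma zeta_nz: "zeta N k \<noteq> 0" unfolding zeta_def by simp

lemma zeta_one:
  assumes N: "N > 0" and z: "zeta N k = 1"
  shows "N dvd k"
proof -
  have eq: "2 * of_real pi * \<i> * of_int k / of_int N = \<i> * of_real (2 * pi * of_int k / of_int N)"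
    by simp
  from z obtain n :: int where n: "Im (\<i> * of_real (2 * pi * of_int k / of_int N)) = of_int (2 * n) * pi"
    unfolding zeta_def exp_eq_1 eq by blast
  hence "2 * pi * of_int k / of_int N = of_int (2 * n) * pi" by simp
  hence "2 * pi * of_int k = of_int (2 * n) * pi * of_int N" using N by (simp add: field_simps)
  hence "real_of_int k = real_of_int (n * N)" by simp
  hence "k = n * N" by (simp only: of_int_eq_iff)
  thus ?thesis by simp
qed

definition Qf :: "int \<Rightarrow> complex \<Rightarrow> complex" where
  "Qf M \<tau> = exp (2 * of_real pi * \<i> * \<tau> / of_int M)"

lemma Qf_nz: "Qf M \<tau> \<noteq> 0" by (simp add: Qf_def)

lemma exp_factor:
  fixes N D M r' r s a n :: int and \<tau> :: complex
  assumes Dp: "D > 0" and Mp: "M > 0" and NDM: "N = D * M" and rD: "r = D * r'"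
  shows "exp (2 * of_real pi * \<i> * (of_int a / of_int N * (of_int r * \<tau> + of_int s) - of_int n * \<tau>))
       = zeta N (a * s) * Qf M \<tau> powi (a * r' - n * M)"
proof -
  have "zeta N (a * s) * Qf M \<tau> powi (a * r' - n * M)
      = exp (2 * of_real pi * \<i> * of_int (a * s) / of_int N + of_int (a * r' - n * M) * (2 * of_real pi * \<i> * \<tau> / of_int M))"
    unfolding zeta_def Qf_def exp_power_int exp_add ..
  also have "2 * of_real pi * \<i> * of_int (a * s) / of_int N + of_int (a * r' - n * M) * (2 * of_real pi * \<i> * \<tau> / of_int M)
      = 2 * of_real pi * \<i> * (of_int a / of_int N * (of_int r * \<tau> + of_int s) - of_int n * \<tau>)"
  proof -
    have d: "(of_int D :: complex) \<noteq> 0" "(of_int M :: complex) \<noteq> 0" using Dp Mp by auto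
    show ?thesis unfolding NDM rD using d by (simp add: field_simps)
  qed
  finally show ?thesis by simp
qed

lemma exp_int_one: "w \<in> \<int> \<Longrightarrow> exp (2 * of_real pi * \<i> * w) = 1"
proof -
  assume "w \<in> \<int>"
  then obtain k where k: "w = of_int k" by (auto elim: Ints_cases)
  have "exp (2 * of_real pi * \<i> * w) = exp (of_int k * (2 * of_real pi * \<i>))" by (simp add: k mult.commute)
  also have "\<dots> = exp (2 * of_real pi * \<i>) powi k" by (rule exp_power_int[symmetric])
  finally show ?thesis by simp
qed

lemma powi_norm_ne1:
  fixes Q :: complex
  assumes "Q \<noteq> 0" "norm Q < 1" "e \<noteq> 0" "norm \<zeta> = 1"
  shows "\<zeta> * Q powi e \<noteq> 1"
proof
  assume h: "\<zeta> * Q powi e = 1"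
  have "norm (\<zeta> * Q powi e) = norm Q powi e" using assms(4) by (simp add: norm_mult norm_power_int)
  hence eq: "norm Q powi e = 1" using h by simp
  have q0: "norm Q > 0" using assms(1) by simp
  show False
  proof (cases "e > 0")
    case True
    hence "norm Q powi e = norm Q ^ nat e" by (simp add: power_int_def)
    also have "\<dots> < 1" using True q0 assms(2) by (simp add: power_less_one_iff)
    finally show False using eq by simp
  next
    case False
    hence "e < 0" using assms(3) by simp
    hence "norm Q powi e = inverse (norm Q ^ nat (- e))" by (simp add: power_int_def power_inverse)
    moreover have "norm Q ^ nat (- e) < 1" using \<open>e < 0\<close> q0 assms(2) by (simp add: power_less_one_iff)
    moreover have "norm Q ^ nat (- e) > 0" using q0 by simp
    ultimately have "norm Q powi e > 1" by (simp add: one_less_inverse)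
    thus False using eq by simp
  qed
qed

lemma single_rep:
  fixes N D M r' s a :: int
  assumes Np: "N > 0" and Dp: "D > 0" and Mp: "M > 0" and NDM: "N = D * M"
    and cop1: "coprime r' M" and cop2: "coprime s D" and na: "\<not> [a = 0] (mod N)"
  shows "\<exists>g. g holomorphic_on ball 0 (1/2) \<and> g 0 = KK (zeta N (a * s)) ((a * r') mod M) M \<and>
     (\<forall>Q. Q \<noteq> 0 \<and> norm Q < 1/2 \<longrightarrow>
        ((\<lambda>n::int. FF (zeta N (a * s) * Q powi (a * r' - n * M))) has_sum
            (Q ^ nat (min ((a * r') mod M) (M - (a * r') mod M)) * g Q)) UNIV)"
proof -
  define c where "c = (a * r') mod M"
  have c0: "0 \<le> c" and cM: "c < M" using Mp by (simp_all add: c_def)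
  obtain g where g: "g holomorphic_on ball 0 (1/2)"
     "g 0 = TT (zeta N (a * s)) (nat (min c (M - c))) c 0 + TT (zeta N (a * s)) (nat (min c (M - c))) (c - M) 0"
     "\<And>Q. Q \<noteq> 0 \<and> norm Q < 1/2 \<Longrightarrow>
        ((\<lambda>n::int. FF (zeta N (a * s) * Q powi (c + n * M))) has_sum (Q ^ nat (min c (M - c)) * g Q)) UNIV"
    using Phi_rep[OF zeta_norm Mp c0 cM] by blast
  have "g 0 = KK (zeta N (a * s)) c M" using g(2) KK_eq[OF c0 cM] by simp
  moreover have "((\<lambda>n::int. FF (zeta N (a * s) * Q powi (a * r' - n * M))) has_sum (Q ^ nat (min c (M - c)) * g Q)) UNIV"
    if "Q \<noteq> 0 \<and> norm Q < 1/2" for Q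
    using Phi_shift[OF Mp, of "\<lambda>e. FF (zeta N (a * s) * Q powi e)" "a * r'"] g(3)[OF that] unfolding c_def by simp
  ultimately show ?thesis using g(1) unfolding c_def by blast
qed

lemma pair_rep:
  fixes N D M r r' s a1 a2 :: int
  assumes Np: "N > 0" and Dp: "D > 0" and Mp: "M > 0" and NDM: "N = D * M" and rD: "r = D * r'"
    and cop1: "coprime r' M" and cop2: "coprime s D"
    and na1: "\<not> [a1 = 0] (mod N)" and na2: "\<not> [a2 = 0] (mod N)"
    and n12: "\<not> [a1 = a2] (mod N)" and n12': "\<not> [a1 = - a2] (mod N)"
  shows "\<exists>G. G holomorphic_on ball 0 (1/2) \<and> G 0 \<noteq> 0 \<and>
     (\<forall>\<tau>. Im \<tau> > 0 \<longrightarrow> norm (Qf M \<tau>) < 1/2 \<longrightarrow>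
        wp (of_int a1 / of_int N * (of_int r * \<tau> + of_int s)) \<tau> - wp (of_int a2 / of_int N * (of_int r * \<tau> + of_int s)) \<tau>
        = (2 * of_real pi * \<i>)^2 * (Qf M \<tau> ^ min (nat (min ((a1 * r') mod M) (M - (a1 * r') mod M)))
                                                     (nat (min ((a2 * r') mod M) (M - (a2 * r') mod M))) * G (Qf M \<tau>)))"
proof -
  define c1 where "c1 = (a1 * r') mod M"
  define c2 where "c2 = (a2 * r') mod M"
  define b1 where "b1 = nat (min c1 (M - c1))"
  define b2 where "b2 = nat (min c2 (M - c2))"
  define m where "m = min b1 b2"
  define z1 where "z1 = zeta N (a1 * s)"
  define z2 where "z2 = zeta N (a2 * s)"
  have c1r: "0 \<le> c1" "c1 < M" and c2r: "0 \<le> c2" "c2 < M" using Mp by (simp_all add: c1_def c2_def)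
  obtain g1 where g1: "g1 holomorphic_on ball 0 (1/2)" "g1 0 = KK z1 c1 M"
    "\<And>Q. Q \<noteq> 0 \<and> norm Q < 1/2 \<Longrightarrow> ((\<lambda>n::int. FF (z1 * Q powi (a1 * r' - n * M))) has_sum (Q ^ b1 * g1 Q)) UNIV"
    using single_rep[OF Np Dp Mp NDM cop1 cop2 na1] unfolding z1_def c1_def b1_def by blast
  obtain g2 where g2: "g2 holomorphic_on ball 0 (1/2)" "g2 0 = KK z2 c2 M"
    "\<And>Q. Q \<noteq> 0 \<and> norm Q < 1/2 \<Longrightarrow> ((\<lambda>n::int. FF (z2 * Q powi (a2 * r' - n * M))) has_sum (Q ^ b2 * g2 Q)) UNIV"
    using single_rep[OF Np Dp Mp NDM cop1 cop2 na2] unfolding z2_def c2_def b2_def by blast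
  define G where "G Q = Q ^ (b1 - m) * g1 Q - Q ^ (b2 - m) * g2 Q" for Q
  have Gh: "G holomorphic_on ball 0 (1/2)" unfolding G_def using g1(1) g2(1) by (intro holomorphic_intros)
  have key: "\<not> N dvd A * s" if "\<not> N dvd A" "M dvd A * r'" for A
    using NT_key[OF Dp Mp NDM cop1 cop2, of A] that by (simp add: cong_0_iff)
  have zz: "zeta N k \<noteq> 1" if "\<not> N dvd k" for k using zeta_one[OF Np] that by blast
  have dvdc: "M dvd A * r'" if "(A * r') mod M = 0" for A using that by (simp add: dvd_eq_mod_eq_0)
  have h1: "z1 \<noteq> 1" if "c1 = 0"
  proof -
    have "\<not> N dvd a1" using na1 by (simp add: cong_0_iff)
    hence "\<not> N dvd a1 * s" using key dvdc that unfolding c1_def by blast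
    thus ?thesis unfolding z1_def by (rule zz)
  qed
  have h2: "z2 \<noteq> 1" if "c2 = 0"
  proof -
    have "\<not> N dvd a2" using na2 by (simp add: cong_0_iff)
    hence "\<not> N dvd a2 * s" using key dvdc that unfolding c2_def by blast
    thus ?thesis unfolding z2_def by (rule zz)
  qed
  have hp: "z1 \<noteq> z2" if "c1 = c2"
  proof
    assume eq: "z1 = z2"
    have "M dvd a1 * r' - a2 * r'" using that unfolding c1_def c2_def by (simp add: mod_eq_dvd_iff)
    hence "M dvd (a1 - a2) * r'" by (simp add: left_diff_distrib)
    moreover have "\<not> N dvd (a1 - a2)" using n12 by (simp add: cong_iff_dvd_diff)
    ultimately have nd: "\<not> N dvd (a1 - a2) * s" using key by blast
    have "zeta N (a1 * s) * zeta N (- (a2 * s)) = zeta N (a2 * s) * zeta N (- (a2 * s))"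
      using eq unfolding z1_def z2_def by simp
    moreover have "zeta N (a1 * s) * zeta N (- (a2 * s)) = zeta N ((a1 - a2) * s)"
      by (simp add: zeta_mult left_diff_distrib)
    moreover have "zeta N (a2 * s) * zeta N (- (a2 * s)) = 1"
      unfolding zeta_mult by (simp add: zeta_def)
    ultimately have "zeta N ((a1 - a2) * s) = 1" by simp
    thus False using zz nd by blast
  qed
  have hm: "z1 * z2 \<noteq> 1" if "c1 + c2 = 0 \<or> c1 + c2 = M"
  proof
    assume eq: "z1 * z2 = 1"
    have "(a1 * r' + a2 * r') mod M = (c1 + c2) mod M" unfolding c1_def c2_def by (simp add: mod_add_eq)
    also have "\<dots> = 0" using that Mp by auto
    finally have "M dvd (a1 + a2) * r'" by (simp add: distrib_right dvd_eq_mod_eq_0)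
    moreover have "\<not> N dvd (a1 + a2)" using n12' by (simp add: cong_iff_dvd_diff)
    ultimately have nd: "\<not> N dvd (a1 + a2) * s" using key by blast
    have "zeta N ((a1 + a2) * s) = 1" using eq unfolding z1_def z2_def by (simp add: zeta_mult distrib_right)
    thus False using zz nd by blast
  qed
  have nzK: "(if min c1 (M - c1) = min (min c1 (M - c1)) (min c2 (M - c2)) then KK z1 c1 M else 0)
           - (if min c2 (M - c2) = min (min c1 (M - c1)) (min c2 (M - c2)) then KK z2 c2 M else 0) \<noteq> 0"
    by (rule KK_pair_nz[OF c1r c2r _ _ h1 h2 hp hm]) (simp_all add: z1_def z2_def zeta_nz)
  have ib1: "int b1 = min c1 (M - c1)" and ib2: "int b2 = min c2 (M - c2)" using c1r c2r by (simp_all add: b1_def b2_def)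
  have G0: "G 0 = (if b1 = m then g1 0 else 0) - (if b2 = m then g2 0 else 0)"
    unfolding G_def m_def by (simp add: power_0_left)
  have "G 0 \<noteq> 0"
  proof -
    have e1: "(b1 = m) = (min c1 (M - c1) = min (min c1 (M - c1)) (min c2 (M - c2)))"
      unfolding m_def ib1[symmetric] ib2[symmetric] by linarith
    have e2: "(b2 = m) = (min c2 (M - c2) = min (min c1 (M - c1)) (min c2 (M - c2)))"
      unfolding m_def ib1[symmetric] ib2[symmetric] by linarith
    show ?thesis using nzK unfolding G0 e1 e2 g1(2) g2(2) .
  qed
  moreover have "wp (of_int a1 / of_int N * (of_int r * \<tau> + of_int s)) \<tau> - wp (of_int a2 / of_int N * (of_int r * \<tau> + of_int s)) \<tau>
        = (2 * of_real pi * \<i>)^2 * (Qf M \<tau> ^ m * G (Qf M \<tau>))" if y: "Im \<tau> > 0" and q: "norm (Qf M \<tau>) < 1/2" for \<tau>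
  proof -
    define Q where "Q = Qf M \<tau>"
    have Q0: "Q \<noteq> 0" unfolding Q_def by (rule Qf_nz)
    have Q1: "norm Q < 1/2" using q unfolding Q_def .
    define w1 where "w1 = of_int a1 / of_int N * (of_int r * \<tau> + of_int s)"
    define w2 where "w2 = of_int a2 / of_int N * (of_int r * \<tau> + of_int s)"
    have ex1: "exp (2 * of_real pi * \<i> * (w1 - of_int n * \<tau>)) = z1 * Q powi (a1 * r' - n * M)" for n
      unfolding w1_def z1_def Q_def by (rule exp_factor[OF Dp Mp NDM rD])
    have ex2: "exp (2 * of_real pi * \<i> * (w2 - of_int n * \<tau>)) = z2 * Q powi (a2 * r' - n * M)" for n
      unfolding w2_def z2_def Q_def by (rule exp_factor[OF Dp Mp NDM rD])
    have ne1: "z1 * Q powi (a1 * r' - n * M) \<noteq> 1" for n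
    proof (cases "a1 * r' - n * M = 0")
      case True
      hence "(a1 * r') mod M = 0" by (metis eq_iff_diff_eq_0 mod_mult_self1_is_0 mult.commute)
      hence "z1 \<noteq> 1" using h1 unfolding c1_def by blast
      thus ?thesis using True by simp
    next
      case False
      show ?thesis by (rule powi_norm_ne1[OF Q0 _ False]) (use Q1 in \<open>simp_all add: z1_def zeta_norm\<close>)
    qed
    have ne2: "z2 * Q powi (a2 * r' - n * M) \<noteq> 1" for n
    proof (cases "a2 * r' - n * M = 0")
      case True
      hence "(a2 * r') mod M = 0" by (metis eq_iff_diff_eq_0 mod_mult_self1_is_0 mult.commute)
      hence "z2 \<noteq> 1" using h2 unfolding c2_def by blast
      thus ?thesis using True by simp
    next
      case False
      show ?thesis by (rule powi_norm_ne1[OF Q0 _ False]) (use Q1 in \<open>simp_all add: z2_def zeta_norm\<close>)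
    qed
    have ni1: "w1 - of_int n * \<tau> \<notin> \<int>" for n using exp_int_one ne1[of n] ex1[of n] by metis
    have ni2: "w2 - of_int n * \<tau> \<notin> \<int>" for n using exp_int_one ne2[of n] ex2[of n] by metis
    have rows: "((\<lambda>n::int. (2 * of_real pi * \<i>)^2 * (FF (exp (2 * of_real pi * \<i> * (w1 - of_int n * \<tau>)))
                                          - FF (exp (2 * of_real pi * \<i> * (w2 - of_int n * \<tau>)))))
          has_sum (wp w1 \<tau> - wp w2 \<tau>)) UNIV"
      by (rule wp_diff_rows[OF y ni1 ni2])
    have s1: "((\<lambda>n::int. FF (exp (2 * of_real pi * \<i> * (w1 - of_int n * \<tau>)))) has_sum (Q ^ b1 * g1 Q)) UNIV"
      unfolding ex1 using g1(3) Q0 Q1 by blast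
    have s2: "((\<lambda>n::int. FF (exp (2 * of_real pi * \<i> * (w2 - of_int n * \<tau>)))) has_sum (Q ^ b2 * g2 Q)) UNIV"
      unfolding ex2 using g2(3) Q0 Q1 by blast
    have "((\<lambda>n::int. (2 * of_real pi * \<i>)^2 * (FF (exp (2 * of_real pi * \<i> * (w1 - of_int n * \<tau>)))
                                          - FF (exp (2 * of_real pi * \<i> * (w2 - of_int n * \<tau>)))))
          has_sum ((2 * of_real pi * \<i>)^2 * (Q ^ b1 * g1 Q - Q ^ b2 * g2 Q))) UNIV"
      by (rule has_sum_cmult_right[OF my_has_sum_diff[OF s1 s2]])
    hence eq: "wp w1 \<tau> - wp w2 \<tau> = (2 * of_real pi * \<i>)^2 * (Q ^ b1 * g1 Q - Q ^ b2 * g2 Q)"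
      using rows has_sum_unique by blast
    have p1: "Q ^ b1 = Q ^ m * Q ^ (b1 - m)" unfolding m_def by (simp add: power_add[symmetric])
    have p2: "Q ^ b2 = Q ^ m * Q ^ (b2 - m)" unfolding m_def by (simp add: power_add[symmetric])
    have "Q ^ b1 * g1 Q - Q ^ b2 * g2 Q = Q ^ m * G Q" unfolding G_def p1 p2 by (simp add: algebra_simps)
    thus ?thesis using eq unfolding w1_def w2_def Q_def by simp
  qed
  ultimately show ?thesis using Gh unfolding m_def b1_def b2_def c1_def c2_def by blast
qed

lemma brace_r:
  fixes N D M r' t' a :: int
  assumes M: "M = N div D" "M > 0" and rt: "[r' = t'] (mod M)"
  shows "brace N D (a * t') = min ((a * r') mod M) (M - (a * r') mod M)"
proof -
  have "[a * r' = a * t'] (mod M)" by (rule cong_mult[OF cong_refl rt])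
  hence e: "(a * t') mod M = (a * r') mod M" unfolding cong_def by simp
  show ?thesis using brace_eq[of N D "a * t'"] M e by simp
qed

theorem proposition2:
  fixes N a1 a2 a3 a4 u t :: int
  assumes "N > 0"
    and "\<not> [a1 = 0] (mod N)" "\<not> [a2 = 0] (mod N)"
    and "\<not> [a3 = 0] (mod N)" "\<not> [a4 = 0] (mod N)"
    and "\<not> [a1 = a2] (mod N)" "\<not> [a1 = - a2] (mod N)"
    and "\<not> [a3 = a4] (mod N)" "\<not> [a3 = - a4] (mod N)"
    and "(1 \<le> t \<and> 2 * t < N \<and> 1 \<le> u \<and> u \<le> gcd t N \<and> gcd u (gcd t N) = 1) \<or>
         ((2 * t = N \<or> t = N) \<and> 1 \<le> u \<and> 2 * u \<le> gcd t N \<and> gcd u (gcd t N) = 1)"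
  shows "\<forall>p q r s. p * s - q * r = 1 \<longrightarrow> [r = t] (mod N) \<longrightarrow> [p = u] (mod (gcd t N)) \<longrightarrow>
           has_q_order (\<lambda>\<tau>. W N a1 a2 a3 a4 (moebius p q r s \<tau>))
             (real_of_int N / real_of_int (gcd t N))
             (min (brace N (gcd t N) (a1 * (t div gcd t N))) (brace N (gcd t N) (a2 * (t div gcd t N)))
              - min (brace N (gcd t N) (a3 * (t div gcd t N))) (brace N (gcd t N) (a4 * (t div gcd t N))))"
proof (intro allI impI)
  fix p q r s :: int
  assume det: "p * s - q * r = 1" and rt: "[r = t] (mod N)" and "[p = u] (mod (gcd t N))"
  note Np = assms(1)
  define D where "D = gcd t N"
  define M where "M = N div D"
  define r' where "r' = r div D"
  have Dp: "D > 0" and NDM: "N = D * M" and rD: "r = D * r'" and Mp: "M > 0"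
    and cop1: "coprime r' M" and cop2: "coprime s D" and rt': "[r' = t div D] (mod M)"
    using NT_basic[OF Np rt det] unfolding D_def[symmetric] M_def[symmetric] r'_def[symmetric] by auto
  define b where "b a = nat (min ((a * r') mod M) (M - (a * r') mod M))" for a
  have br: "brace N D (a * (t div D)) = int (b a)" for a
  proof -
    have "0 \<le> (a * r') mod M" "(a * r') mod M < M" using Mp by simp_all
    thus ?thesis unfolding b_def using brace_r[OF M_def Mp rt', of a] by simp
  qed
  obtain G12 where G12: "G12 holomorphic_on ball 0 (1/2)" "G12 0 \<noteq> 0"
    "\<And>\<tau>. Im \<tau> > 0 \<Longrightarrow> norm (Qf M \<tau>) < 1/2 \<Longrightarrow>
        wp (of_int a1 / of_int N * (of_int r * \<tau> + of_int s)) \<tau> - wp (of_int a2 / of_int N * (of_int r * \<tau> + of_int s)) \<tau>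
        = (2 * of_real pi * \<i>)^2 * (Qf M \<tau> ^ min (b a1) (b a2) * G12 (Qf M \<tau>))"
    using pair_rep[OF Np Dp Mp NDM rD cop1 cop2 assms(2,3,6,7)] unfolding b_def by blast
  obtain G34 where G34: "G34 holomorphic_on ball 0 (1/2)" "G34 0 \<noteq> 0"
    "\<And>\<tau>. Im \<tau> > 0 \<Longrightarrow> norm (Qf M \<tau>) < 1/2 \<Longrightarrow>
        wp (of_int a3 / of_int N * (of_int r * \<tau> + of_int s)) \<tau> - wp (of_int a4 / of_int N * (of_int r * \<tau> + of_int s)) \<tau>
        = (2 * of_real pi * \<i>)^2 * (Qf M \<tau> ^ min (b a3) (b a4) * G34 (Qf M \<tau>))"
    using pair_rep[OF Np Dp Mp NDM rD cop1 cop2 assms(4,5,8,9)] unfolding b_def by blast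
  have "continuous_on (ball 0 (1/2)) G34" using G34(1) by (rule holomorphic_on_imp_continuous_on)
  hence "isCont G34 0" using continuous_on_eq_continuous_at[of "ball 0 (1/2)" G34] by simp
  then obtain \<epsilon> where ep: "\<epsilon> > 0" and epG: "\<And>y. dist 0 y < \<epsilon> \<Longrightarrow> G34 y \<noteq> 0"
    using continuous_at_avoid[of 0 G34 0] G34(2) by blast
  define r0 :: real where "r0 = min \<epsilon> (1/2)"
  have r0p: "r0 > 0" using ep by (simp add: r0_def)
  have r0h: "r0 \<le> 1/2" "r0 \<le> \<epsilon>" by (simp_all add: r0_def)
  define g where "g Q = G12 Q / G34 Q" for Q
  have G34nz: "G34 Q \<noteq> 0" if "Q \<in> ball 0 r0" for Q using epG[of Q] that r0h by simp
  have gh: "g holomorphic_on ball 0 r0"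
  proof -
    have sub: "ball 0 r0 \<subseteq> ball (0::complex) (1/2)" using r0h by auto
    show ?thesis unfolding g_def
      by (intro holomorphic_on_divide holomorphic_on_subset[OF G12(1) sub] holomorphic_on_subset[OF G34(1) sub])
         (use G34nz in auto)
  qed
  have g0: "g 0 \<noteq> 0" unfolding g_def using G12(2) G34(2) by simp
  define y0 where "y0 = max 0 (- real_of_int M * ln r0 / (2 * pi))"
  define mm where "mm = int (min (b a1) (b a2)) - int (min (b a3) (b a4))"
  have hq: "(real_of_int N / real_of_int D) = real_of_int M" using NDM Dp by simp
  have main: "let qq = exp (2 * of_real pi * \<i> * \<tau> / of_real (real_of_int N / real_of_int D))
             in qq \<in> ball 0 r0 \<and> W N a1 a2 a3 a4 (moebius p q r s \<tau>) = qq powi mm * g qq"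
    if y: "Im \<tau> > y0" for \<tau>
  proof -
    have yp: "Im \<tau> > 0" using y by (simp add: y0_def)
    define Q where "Q = Qf M \<tau>"
    have qQ: "exp (2 * of_real pi * \<i> * \<tau> / of_real (real_of_int N / real_of_int D)) = Q"
      unfolding Q_def Qf_def hq by simp
    have nQ: "norm Q = exp (- (2 * pi * Im \<tau> / real_of_int M))"
      unfolding Q_def Qf_def by simp
    have h1: "- real_of_int M * ln r0 / (2 * pi) < Im \<tau>" using y by (simp add: y0_def)
    have "(- real_of_int M * ln r0 / (2 * pi)) * (2 * pi) < Im \<tau> * (2 * pi)"
      by (rule mult_strict_right_mono[OF h1]) (use pi_gt_zero in simp)
    hence "- real_of_int M * ln r0 < Im \<tau> * (2 * pi)" by simp
    hence "ln r0 > - (2 * pi * Im \<tau> / real_of_int M)" using Mp by (simp add: field_simps)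
    hence "exp (- (2 * pi * Im \<tau> / real_of_int M)) < exp (ln r0)" by simp
    hence Qr: "norm Q < r0" using r0p unfolding nQ by simp
    hence Qb: "Q \<in> ball 0 r0" by simp
    have Qh: "norm Q < 1/2" using Qr r0h by simp
    have Q0: "Q \<noteq> 0" unfolding Q_def by (rule Qf_nz)
    have G34Q: "G34 Q \<noteq> 0" by (rule G34nz[OF Qb])
    define j where "j = of_int r * \<tau> + of_int s"
    have j0: "j \<noteq> 0" unfolding j_def by (rule moebius_denom_nz[OF det yp])
    have hom: "wp (of_int a / of_int N) (moebius p q r s \<tau>) = j^2 * wp (of_int a / of_int N * j) \<tau>" for a :: int
      unfolding j_def by (rule wp_homog[OF det yp])
    have E12: "wp (of_int a1 / of_int N * j) \<tau> - wp (of_int a2 / of_int N * j) \<tau>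
        = (2 * of_real pi * \<i>)^2 * (Q ^ min (b a1) (b a2) * G12 Q)"
      unfolding j_def Q_def by (rule G12(3)[OF yp Qh[unfolded Q_def]])
    have E34: "wp (of_int a3 / of_int N * j) \<tau> - wp (of_int a4 / of_int N * j) \<tau>
        = (2 * of_real pi * \<i>)^2 * (Q ^ min (b a3) (b a4) * G34 Q)"
      unfolding j_def Q_def by (rule G34(3)[OF yp Qh[unfolded Q_def]])
    have c0: "(2 * of_real pi * \<i> :: complex)^2 \<noteq> 0" by simp
    have "W N a1 a2 a3 a4 (moebius p q r s \<tau>)
        = (j^2 * (wp (of_int a1 / of_int N * j) \<tau> - wp (of_int a2 / of_int N * j) \<tau>)) /
          (j^2 * (wp (of_int a3 / of_int N * j) \<tau> - wp (of_int a4 / of_int N * j) \<tau>))"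
      unfolding W_def hom by (simp add: right_diff_distrib)
    also have "\<dots> = (Q ^ min (b a1) (b a2) * G12 Q) / (Q ^ min (b a3) (b a4) * G34 Q)"
      unfolding E12 E34 using j0 c0 by simp
    also have "\<dots> = Q powi mm * g Q"
    proof -
      have "Q powi mm = Q ^ min (b a1) (b a2) / Q ^ min (b a3) (b a4)"
        unfolding mm_def using Q0 by (simp add: power_int_diff)
      thus ?thesis unfolding g_def using Q0 G34Q by (simp add: field_simps)
    qed
    finally show ?thesis unfolding qQ Let_def using Qb by simp
  qed
  have mm_eq: "min (brace N D (a1 * (t div D))) (brace N D (a2 * (t div D)))
              - min (brace N D (a3 * (t div D))) (brace N D (a4 * (t div D))) = mm"
    unfolding br mm_def by simp
  show "has_q_order (\<lambda>\<tau>. W N a1 a2 a3 a4 (moebius p q r s \<tau>))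
             (real_of_int N / real_of_int (gcd t N))
             (min (brace N (gcd t N) (a1 * (t div gcd t N))) (brace N (gcd t N) (a2 * (t div gcd t N)))
              - min (brace N (gcd t N) (a3 * (t div gcd t N))) (brace N (gcd t N) (a4 * (t div gcd t N))))"
    unfolding D_def[symmetric] mm_eq has_q_order_def
    using r0p gh g0 main by blast
qed

end
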